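(* Let $F$ be a finite field with $q$ elements and $G$ a finite abelian group of order $m$. Let $r\in(0,1)$ and $\delta\in(0,1-q^{-1})$. For each positive integer $n$ put $k=[rn]$ (the integer nearest to $rn$), let $A$ be chosen uniformly at random from $(FG)^{k\times n}$, and let $$\hat{\mathcal N}_{C_A}(\delta)=\big|\{\mathbf{b}\in(FG)^k \mid 1\le \mathrm{w}(\mathbf{b}A)\le mn\delta\}\big|.$$ Then $$\lim_{n\to\infty}\mathrm{E}\big(\hat{\mathcal N}_{C_A}(\delta)\big)=\begin{cases}0,& r<g_q(\delta),\\ \infty,& r>g_q(\delta),\end{cases}$$ and both limits converge exponentially.
   Context: $FG$ is the group algebra. Each element $\sum_{z\in G}a_z z$ of $FG$ is identified with the word $(a_z)_{z\in G}\in F^m$, and elements of $(FG)^n$ with concatenated words of length $mn$; $\mathrm{w}$ denotes Hamming weight. For $\mathbf{b}=(b_1,\dots,b_k)\in(FG)^k$ and $A=(a_{ij})$, $\mathbf{b}A=(\sum_i b_ia_{i1},\dots,\sum_i b_ia_{in})\in(FG)^n$. The $q$-ary entropy is $h_q(x)=x\log_q(q-1)-x\log_q x-(1-x)\log_q(1-x)$ (with $0\log_q0=0$) and $g_q(x)=1-h_q(x)$. *)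

theory Defs
  imports "HOL-Analysis.Analysis"
begin

text \<open>An element of the group algebra FG is a
function G \<Rightarrow> F (its coefficient vector); multiplication is convolution.\<close>

definition gconv :: "('g::{finite,ab_group_add} \<Rightarrow> 'f::{finite,field}) \<Rightarrow> ('g \<Rightarrow> 'f) \<Rightarrow> ('g \<Rightarrow> 'f)" where
  "gconv a b = (\<lambda>z. \<Sum>x\<in>UNIV. a x * b (z - x))"

text \<open>Vectors in (FG)^k are functions nat \<Rightarrow> FG vanishing from index k on; k\<times>n matrices are
functions nat \<Rightarrow> nat \<Rightarrow> FG vanishing outside {..<k}\<times>{..<n}.\<close>

definition gvecs :: "nat \<Rightarrow> (nat \<Rightarrow> 'g \<Rightarrow> 'f::zero) set" where
  "gvecs k = {b. \<forall>i. k \<le> i \<longrightarrow> b i = (\<lambda>_. 0)}"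

definition gmats :: "nat \<Rightarrow> nat \<Rightarrow> (nat \<Rightarrow> nat \<Rightarrow> 'g \<Rightarrow> 'f::zero) set" where
  "gmats k n = {A. \<forall>i j. (k \<le> i \<or> n \<le> j) \<longrightarrow> A i j = (\<lambda>_. 0)}"

definition vecmat :: "nat \<Rightarrow> nat \<Rightarrow> (nat \<Rightarrow> 'g::{finite,ab_group_add} \<Rightarrow> 'f::{finite,field})
     \<Rightarrow> (nat \<Rightarrow> nat \<Rightarrow> 'g \<Rightarrow> 'f) \<Rightarrow> (nat \<Rightarrow> 'g \<Rightarrow> 'f)" where
  "vecmat k n b A = (\<lambda>j. if j < n then (\<lambda>z. \<Sum>i<k. gconv (b i) (A i j) z) else (\<lambda>_. 0))"

text \<open>Hamming weight of an element of (FG)^n viewed as a word of length mn over F.\<close>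
definition hweight :: "nat \<Rightarrow> (nat \<Rightarrow> 'g::finite \<Rightarrow> 'f::zero) \<Rightarrow> nat" where
  "hweight n v = (\<Sum>j<n. card {z. v j z \<noteq> 0})"

definition Nhat :: "nat \<Rightarrow> nat \<Rightarrow> real \<Rightarrow> (nat \<Rightarrow> nat \<Rightarrow> 'g::{finite,ab_group_add} \<Rightarrow> 'f::{finite,field}) \<Rightarrow> nat" where
  "Nhat k n \<delta> A = card {b \<in> gvecs k. 1 \<le> hweight n (vecmat k n b A)
        \<and> real (hweight n (vecmat k n b A)) \<le> real CARD('g) * real n * \<delta>}"

definition ENhat :: "('g::{finite,ab_group_add} \<Rightarrow> 'f::{finite,field}) itself \<Rightarrow> nat \<Rightarrow> nat \<Rightarrow> real \<Rightarrow> real" where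
  "ENhat _ k n \<delta> = (\<Sum>A\<in>(gmats k n :: (nat \<Rightarrow> nat \<Rightarrow> 'g \<Rightarrow> 'f) set). real (Nhat k n \<delta> A))
                      / real (card (gmats k n :: (nat \<Rightarrow> nat \<Rightarrow> 'g \<Rightarrow> 'f) set))"

definition qentropy :: "real \<Rightarrow> real \<Rightarrow> real" where
  "qentropy q x = x * log q (q - 1)
     - (if x = 0 then 0 else x * log q x) - (if x = 1 then 0 else (1 - x) * log q (1 - x))"

definition gq :: "real \<Rightarrow> real \<Rightarrow> real" where
  "gq q x = 1 - qentropy q x"

end

theory Submission
  imports Defs "HOL-Library.Function_Algebras" "HOL-Library.Cardinality"
begin

definition WS :: "'a set \<Rightarrow> ('a \<Rightarrow> 'f::zero) set" where
  "WS D = {f. \<forall>x. x \<notin> D \<longrightarrow> f x = 0}"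
definition wt :: "'a set \<Rightarrow> ('a \<Rightarrow> 'f::zero) \<Rightarrow> nat" where
  "wt D f = card {x\<in>D. f x \<noteq> 0}"

lemma finite_WS: "finite D \<Longrightarrow> finite (WS D :: ('a \<Rightarrow> 'f::{zero,finite}) set)"
proof -
  assume "finite D"
  have "WS D = {f::'a\<Rightarrow>'f. \<forall>x. (x \<in> D \<longrightarrow> f x \<in> UNIV) \<and> (x \<notin> D \<longrightarrow> f x = 0)}"
    unfolding WS_def by auto
  moreover have "finite {f::'a\<Rightarrow>'f. \<forall>x. (x \<in> D \<longrightarrow> f x \<in> UNIV) \<and> (x \<notin> D \<longrightarrow> f x = 0)}"
    by (rule finite_set_of_finite_funs) (simp_all add: \<open>finite D\<close>)
  ultimately show ?thesis by simp
qed

lemma WS_empty: "WS {} = {\<lambda>_. 0}"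
  unfolding WS_def by auto

lemma WS_insert: "a \<notin> D \<Longrightarrow> WS (insert a D) = (\<lambda>(v,g). g(a:=v)) ` (UNIV \<times> WS D)"
proof (intro equalityI subsetI)
  fix f assume "a \<notin> D" "f \<in> WS (insert a D)"
  then have "f = (\<lambda>(v,g). g(a:=v)) (f a, f(a:=0))" "(f a, f(a:=0)) \<in> UNIV \<times> WS D"
    unfolding WS_def by auto
  then show "f \<in> (\<lambda>(v,g). g(a:=v)) ` (UNIV \<times> WS D)" by blast
next
  fix f assume "f \<in> (\<lambda>(v,g). g(a:=v)) ` (UNIV \<times> WS D)"
  then show "f \<in> WS (insert a D)" unfolding WS_def by auto
qed

lemma inj_WS_insert: "a \<notin> D \<Longrightarrow> inj_on (\<lambda>(v,g). g(a:=v)) (UNIV \<times> WS D)"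
  unfolding inj_on_def WS_def
  by (auto simp: fun_eq_iff)

lemma wt_upd:
  assumes "finite D" "a \<notin> D" "g \<in> WS D"
  shows "wt (insert a D) (g(a:=v)) = wt D g + (if v = 0 then 0 else 1)"
proof -
  have ga: "g a = 0" using assms unfolding WS_def by auto
  have e: "{x\<in>insert a D. (g(a:=v)) x \<noteq> 0} = (if v = 0 then {x\<in>D. g x \<noteq> 0} else insert a {x\<in>D. g x \<noteq> 0})"
    using assms(2) by auto
  show ?thesis unfolding wt_def e using assms by auto
qed

lemma sum_WS_insert:
  assumes "finite D" "a \<notin> D"
  shows "(\<Sum>f\<in>WS (insert a D). \<phi> f) = (\<Sum>v\<in>(UNIV::'f::{zero,finite} set). \<Sum>g\<in>WS D. \<phi> (g(a:=v)))"
proof -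
  have "(\<Sum>f\<in>WS (insert a D). \<phi> f) = (\<Sum>p\<in>UNIV \<times> (WS D :: ('a\<Rightarrow>'f) set). \<phi> ((\<lambda>(v,g). g(a:=v)) p))"
    unfolding WS_insert[OF assms(2)] by (rule sum.reindex[OF inj_WS_insert[OF assms(2)], unfolded comp_def])
  also have "\<dots> = (\<Sum>(v,g)\<in>UNIV \<times> (WS D :: ('a\<Rightarrow>'f) set). \<phi> (g(a:=v)))"
    by (simp add: split_def)
  also have "\<dots> = (\<Sum>v\<in>UNIV. \<Sum>g\<in>WS D. \<phi> (g(a:=v)))"
    by (rule sum.cartesian_product[symmetric])
  finally show ?thesis .
qed

lemma sum_UNIV_split0:
  "(\<Sum>v\<in>(UNIV::'f::{zero,finite} set). F v) = F 0 + (\<Sum>v\<in>UNIV - {0}. F v)"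
  by (simp add: sum.remove)

lemma card_nonzero: "card (UNIV - {0::'f::{zero,finite}}) = CARD('f) - 1"
  by (simp add: card_Diff_singleton)

lemma genfun_WS:
  assumes "finite D"
  shows "(\<Sum>f\<in>(WS D :: ('a \<Rightarrow> 'f::{zero,finite}) set). (x::real) ^ wt D f) = (1 + (real CARD('f) - 1) * x) ^ card D"
  using assms
proof (induction D rule: finite_induct)
  case empty
  then show ?case by (simp add: WS_empty wt_def)
next
  case (insert a D)
  have "(\<Sum>f\<in>(WS (insert a D) :: ('a \<Rightarrow> 'f) set). x ^ wt (insert a D) f)
      = (\<Sum>v\<in>(UNIV::'f set). \<Sum>g\<in>(WS D :: ('a \<Rightarrow> 'f) set). x ^ wt (insert a D) (g(a:=v)))"
    using insert by (simp add: sum_WS_insert)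
  also have "\<dots> = (\<Sum>v\<in>(UNIV::'f set). \<Sum>g\<in>(WS D :: ('a \<Rightarrow> 'f) set). x ^ (wt D g + (if v = 0 then 0 else 1)))"
    by (intro sum.cong refl) (simp add: wt_upd insert)
  also have "\<dots> = (\<Sum>v\<in>(UNIV::'f set). (if v = 0 then 1 else x) * (\<Sum>g\<in>(WS D :: ('a \<Rightarrow> 'f) set). x ^ wt D g))"
    by (intro sum.cong refl) (auto simp: power_add sum_distrib_left mult.commute)
  also have "\<dots> = (1 + (real CARD('f) - 1) * x) * (\<Sum>g\<in>(WS D :: ('a \<Rightarrow> 'f) set). x ^ wt D g)"
    apply (subst sum_UNIV_split0)
    apply (simp add: card_nonzero sum_distrib_right[symmetric])
    by (simp add: algebra_simps of_nat_diff Suc_leI)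
  finally show ?case using insert by simp
qed

definition cnt :: "'a set \<Rightarrow> 'f::{zero,finite} itself \<Rightarrow> nat \<Rightarrow> nat" where
  "cnt D _ t = (\<Sum>f\<in>(WS D :: ('a \<Rightarrow> 'f) set). if wt D f = t then 1 else 0)"

lemma cnt_formula:
  assumes "finite D"
  shows "cnt D TYPE('f::{zero,finite}) t = (card D choose t) * (CARD('f) - 1) ^ t"
  using assms
proof (induction D arbitrary: t rule: finite_induct)
  case empty
  then show ?case by (simp add: cnt_def WS_empty wt_def)
next
  case (insert a D)
  have "cnt (insert a D) TYPE('f) t
      = (\<Sum>v\<in>(UNIV::'f set). \<Sum>g\<in>(WS D :: ('a \<Rightarrow> 'f) set). if wt (insert a D) (g(a:=v)) = t then 1 else 0)"
    unfolding cnt_def using insert by (simp add: sum_WS_insert)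
  also have "\<dots> = (\<Sum>v\<in>(UNIV::'f set). \<Sum>g\<in>(WS D :: ('a \<Rightarrow> 'f) set). if wt D g + (if v = 0 then 0 else 1) = t then 1 else 0)"
    by (intro sum.cong refl) (simp add: wt_upd insert)
  also have "\<dots> = cnt D TYPE('f) t + (\<Sum>v\<in>(UNIV::'f set) - {0}. \<Sum>g\<in>(WS D :: ('a \<Rightarrow> 'f) set). if wt D g + 1 = t then 1 else 0)"
    by (subst sum_UNIV_split0) (simp add: cnt_def)
  also have "\<dots> = cnt D TYPE('f) t + (CARD('f) - 1) * (\<Sum>g\<in>(WS D :: ('a \<Rightarrow> 'f) set). if wt D g + 1 = t then 1 else 0)"
    by (simp add: card_nonzero)
  finally have eq: "cnt (insert a D) TYPE('f) t = cnt D TYPE('f) t + (CARD('f) - 1) * (\<Sum>g\<in>(WS D :: ('a \<Rightarrow> 'f) set). if wt D g + 1 = t then 1 else 0)" .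
  show ?case
  proof (cases t)
    case 0
    then show ?thesis using eq insert by simp
  next
    case (Suc s)
    have "(\<Sum>g\<in>(WS D :: ('a \<Rightarrow> 'f) set). if wt D g + 1 = t then 1 else 0) = cnt D TYPE('f) s"
      unfolding cnt_def Suc by simp
    then show ?thesis using eq insert Suc by (simp add: algebra_simps)
  qed
qed

lemma card_wt_eq:
  assumes "finite D"
  shows "card {f\<in>(WS D :: ('a \<Rightarrow> 'f::{zero,finite}) set). wt D f = t} = (card D choose t) * (CARD('f) - 1) ^ t"
proof -
  have "card {f\<in>(WS D :: ('a \<Rightarrow> 'f) set). wt D f = t} = cnt D TYPE('f) t"
    unfolding cnt_def by (simp add: sum.If_cases finite_WS[OF assms] Int_def)
  then show ?thesis using cnt_formula[OF assms] by simp
qed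

lemma binom_step: "Suc s * (N choose Suc s) = (N - s) * (N choose s)"
  by (metis binomial_absorption binomial_absorb_comp)

lemma binom_mode:
  fixes N t :: nat
  assumes "0 < t" "t < N"
  shows "1 / real (N + 1) \<le> real (N choose t) * (real t / real N) ^ t * (1 - real t / real N) ^ (N - t)"
proof -
  define p where "p = real t / real N"
  have p0: "0 < p" "p < 1" using assms unfolding p_def by auto
  define a where "a s = real (N choose s) * p ^ s * (1 - p) ^ (N - s)" for s
  have a0: "0 \<le> a s" for s unfolding a_def using p0 by auto
  have ident: "a (Suc s) * (real (Suc s) * (1 - p)) = a s * (real (N - s) * p)" if "s < N" for s
  proof -
    have e1: "(1 - p) ^ (N - Suc s) * (1 - p) = (1 - p) ^ (N - s)"
      using that by (metis Suc_diff_Suc power_Suc2)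
    have e2: "real (Suc s) * real (N choose Suc s) = real (N - s) * real (N choose s)"
      using binom_step[of s N] by (metis of_nat_mult)
    have "a (Suc s) * (real (Suc s) * (1 - p)) = (real (Suc s) * real (N choose Suc s)) * p ^ Suc s * ((1 - p) ^ (N - Suc s) * (1 - p))"
      unfolding a_def by (simp add: algebra_simps)
    also have "\<dots> = (real (N - s) * real (N choose s)) * p ^ Suc s * (1 - p) ^ (N - s)"
      using e1 e2 by simp
    also have "\<dots> = a s * (real (N - s) * p)" unfolding a_def by (simp add: algebra_simps)
    finally show ?thesis .
  qed
  have Nt: "real N * p = real t" unfolding p_def using assms by auto
  have inc: "a s \<le> a (Suc s)" if "s < t" for s
  proof -
    have sN: "s < N" using that assms by auto
    have "real (Suc s) * (1 - p) \<le> real (N - s) * p"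
    proof -
      have "real N * (real (Suc s) * (1 - p)) \<le> real N * (real (N - s) * p)"
      proof -
        have l: "real N * (real (Suc s) * (1 - p)) = real (Suc s) * (real N - real t)"
          using Nt by (simp add: algebra_simps)
        have r: "real N * (real (N - s) * p) = (real N - real s) * real t"
          using Nt sN by (simp add: algebra_simps of_nat_diff)
        have "real (Suc s) \<le> real t" using that by simp
        have "0 \<le> real N * (real t - real (Suc s)) + real t" using that by simp
        then show ?thesis unfolding l r by (simp add: algebra_simps)
      qed
      then show ?thesis using assms by simp
    qed
    moreover have "0 < real (Suc s) * (1 - p)" using p0 by simp
    ultimately show ?thesis using ident[OF sN] mult_left_mono[OF _ a0[of s]]
      by (metis mult_right_le_imp_le)
  qed
  have dec: "a (Suc s) \<le> a s" if "t \<le> s" "s < N" for s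
  proof -
    have "real (N - s) * p \<le> real (Suc s) * (1 - p)"
    proof -
      have "real N * (real (N - s) * p) \<le> real N * (real (Suc s) * (1 - p))"
      proof -
        have l: "real N * (real (Suc s) * (1 - p)) = real (Suc s) * (real N - real t)"
          using Nt by (simp add: algebra_simps)
        have r: "real N * (real (N - s) * p) = (real N - real s) * real t"
          using Nt that by (simp add: algebra_simps of_nat_diff)
        have "(real N - real s) * real t \<le> (real N - real t) * real t"
          using that by (intro mult_right_mono) auto
        also have "\<dots> \<le> (real N - real t) * real (Suc s)"
          using that assms by (intro mult_left_mono) auto
        finally show ?thesis unfolding l r by (simp add: algebra_simps)
      qed
      then show ?thesis using assms by simp
    qed
    moreover have "0 < real (Suc s) * (1 - p)" using p0 by simp
    ultimately show ?thesis using ident[OF that(2)] mult_left_mono[OF _ a0[of s]]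
      by (metis mult_right_le_imp_le)
  qed
  have up: "a s \<le> a t" if "s + d = t" for s d
    using that
  proof (induction d arbitrary: s)
    case 0 then show ?case by simp
  next
    case (Suc d)
    then have "a s \<le> a (Suc s)" by (intro inc) simp
    also have "a (Suc s) \<le> a t" using Suc by simp
    finally show ?case .
  qed
  have down: "a s \<le> a t" if "t \<le> s" "s \<le> N" for s
    using that
  proof (induction s)
    case 0 then show ?case by simp
  next
    case (Suc s)
    show ?case
    proof (cases "t \<le> s")
      case True
      then have "a (Suc s) \<le> a s" using Suc by (intro dec) auto
      also have "a s \<le> a t" using Suc True by simp
      finally show ?thesis .
    next
      case False
      then have "Suc s = t" using Suc by simp
      then show ?thesis by simp
    qed
  qed
  have "1 = (p + (1 - p)) ^ N" by simp
  also have "\<dots> = (\<Sum>s\<le>N. a s)" unfolding a_def binomial_ring by (simp add: algebra_simps)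
  also have "\<dots> \<le> (\<Sum>s\<le>N. a t)"
    by (intro sum_mono) (metis le_cases up le_add_diff_inverse down atMost_iff)
  also have "\<dots> = real (N + 1) * a t" by simp
  finally have "1 \<le> real (N + 1) * a t" .
  then have "1 / real (N + 1) \<le> a t" by (simp add: divide_le_eq mult.commute del: of_nat_Suc of_nat_add)
  then show ?thesis unfolding a_def p_def .
qed

lemma qentropy_inner:
  assumes "0 < x" "x < 1" "1 < q"
  shows "qentropy q x * ln q = x * ln (q - 1) - x * ln x - (1 - x) * ln (1 - x)"
  using assms unfolding qentropy_def log_def by (simp add: field_simps)

lemma chernoff:
  fixes \<delta> :: real
  assumes "finite D" "2 \<le> CARD('f::{zero,finite})" "0 < \<delta>" "\<delta> < 1 - 1 / real CARD('f)"
  shows "real (card {f\<in>(WS D :: ('a \<Rightarrow> 'f) set). real (wt D f) \<le> \<delta> * real (card D)})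
          \<le> real CARD('f) powr (real (card D) * qentropy (real CARD('f)) \<delta>)"
proof -
  define q where "q = real CARD('f)"
  define N where "N = real (card D)"
  have q2: "2 \<le> q" using assms unfolding q_def by simp
  have d1: "\<delta> < 1" using assms q2 unfolding q_def[symmetric] by (smt (verit) divide_pos_pos)
  define x where "x = \<delta> / ((q - 1) * (1 - \<delta>))"
  have x0: "0 < x" unfolding x_def using q2 d1 assms by auto
  have "\<delta> * q < q - 1" using assms(4) q2 unfolding q_def[symmetric] by (simp add: field_simps)
  then have "\<delta> \<le> (q - 1) * (1 - \<delta>)" by (simp add: algebra_simps)
  then have x1: "x \<le> 1" unfolding x_def using q2 d1 by (simp add: divide_simps)
  let ?S = "{f\<in>(WS D :: ('a \<Rightarrow> 'f) set). real (wt D f) \<le> \<delta> * N}"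
  have fin: "finite (WS D :: ('a \<Rightarrow> 'f) set)" by (rule finite_WS[OF assms(1)])
  have "real (card ?S) = (\<Sum>f\<in>?S. 1)" by simp
  also have "\<dots> \<le> (\<Sum>f\<in>?S. x powr (real (wt D f) - \<delta> * N))"
  proof (intro sum_mono)
    fix f assume "f \<in> ?S"
    then have e: "0 \<le> - (real (wt D f) - \<delta> * N)" by simp
    have "1 \<le> (1/x) powr (- (real (wt D f) - \<delta> * N))"
      by (rule ge_one_powr_ge_zero[OF _ e]) (use x0 x1 in simp)
    also have "\<dots> = x powr (real (wt D f) - \<delta> * N)"
      using x0 by (simp add: powr_divide powr_minus_divide powr_diff)
    finally show "1 \<le> x powr (real (wt D f) - \<delta> * N)" .
  qed
  also have "\<dots> \<le> (\<Sum>f\<in>(WS D :: ('a \<Rightarrow> 'f) set). x powr (real (wt D f) - \<delta> * N))"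
    by (intro sum_mono2 fin) auto
  also have "\<dots> = (\<Sum>f\<in>(WS D :: ('a \<Rightarrow> 'f) set). x powr (- \<delta> * N) * x ^ wt D f)"
    using x0 by (intro sum.cong refl) (simp add: powr_diff powr_realpow powr_minus divide_simps)
  also have "\<dots> = x powr (- \<delta> * N) * (1 + (q - 1) * x) ^ card D"
    by (simp add: sum_distrib_left[symmetric] genfun_WS[OF assms(1)] q_def)
  also have "\<dots> = q powr (N * qentropy q \<delta>)"
  proof -
    have e0: "(q - 1) * x = \<delta> / (1 - \<delta>)" unfolding x_def using q2 d1 by simp
    have e1: "1 + (q - 1) * x = 1 / (1 - \<delta>)" unfolding e0 using d1 by (simp add: field_simps)
    have "x powr (- \<delta> * N) * (1 + (q - 1) * x) ^ card D = exp (- \<delta> * N * ln x) * exp (- N * ln (1 - \<delta>))"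
      unfolding e1 using x0 d1 by (simp add: powr_def ln_realpow[symmetric] ln_div N_def exp_of_nat_mult[symmetric] power_divide)
         (simp add: exp_minus field_simps exp_ln)
    also have "\<dots> = exp (N * (qentropy q \<delta> * ln q))"
    proof -
      have lx: "ln x = ln \<delta> - ln (q - 1) - ln (1 - \<delta>)"
        unfolding x_def using q2 d1 assms by (simp add: ln_div ln_mult)
      have hq: "qentropy q \<delta> * ln q = \<delta> * ln (q - 1) - \<delta> * ln \<delta> - (1 - \<delta>) * ln (1 - \<delta>)"
        using qentropy_inner[OF assms(3) d1, of q] q2 by simp
      show ?thesis unfolding exp_add[symmetric] hq lx by (simp add: algebra_simps)
    qed
    also have "\<dots> = q powr (N * qentropy q \<delta>)" using q2 by (simp add: powr_def mult.commute mult.left_commute)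
    finally show ?thesis .
  qed
  finally show ?thesis unfolding q_def N_def .
qed

lemma count_lower:
  assumes "finite D" "2 \<le> CARD('f::{zero,finite})" "0 < t" "t < card D"
  shows "real CARD('f) powr (real (card D) * qentropy (real CARD('f)) (real t / real (card D))) / real (card D + 1)
         \<le> real (card {f\<in>(WS D :: ('a \<Rightarrow> 'f) set). wt D f = t})"
proof -
  define q where "q = real CARD('f)"
  define N where "N = card D"
  define p where "p = real t / real N"
  have q2: "2 \<le> q" using assms unfolding q_def by simp
  have N0: "0 < N" using assms N_def by auto
  have p0: "0 < p" "p < 1" unfolding p_def using assms N_def by auto
  have c: "real (card {f\<in>(WS D :: ('a \<Rightarrow> 'f) set). wt D f = t}) = real (N choose t) * (q - 1) ^ t"
    unfolding card_wt_eq[OF assms(1)] N_def q_def using assms(2) by (simp add: of_nat_diff)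
  have m: "1 / real (N + 1) \<le> real (N choose t) * p ^ t * (1 - p) ^ (N - t)"
    unfolding p_def using binom_mode[of t N] assms N_def by simp
  have pos: "0 < p ^ t * (1 - p) ^ (N - t)" using p0 by simp
  have key: "q powr (real N * qentropy q p) = (q - 1) ^ t / (p ^ t * (1 - p) ^ (N - t))"
  proof -
    have Np: "real N * p = real t" "real N * (1 - p) = real (N - t)"
      unfolding p_def using N0 assms N_def by (auto simp: algebra_simps of_nat_diff)
    have "q powr (real N * qentropy q p) = exp (real N * (qentropy q p * ln q))"
      using q2 by (simp add: powr_def mult.commute mult.left_commute)
    also have "\<dots> = exp (real N * (p * ln (q - 1) - p * ln p - (1 - p) * ln (1 - p)))"
      using qentropy_inner[OF p0, of q] q2 by simp
    also have "real N * (p * ln (q - 1) - p * ln p - (1 - p) * ln (1 - p))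
       = (real N * p) * ln (q - 1) - (real N * p) * ln p - (real N * (1 - p)) * ln (1 - p)"
      by (simp add: algebra_simps)
    also have "exp \<dots> = exp (real t * ln (q - 1) - real t * ln p - real (N - t) * ln (1 - p))"
      unfolding Np by simp
    also have "\<dots> = (q - 1) ^ t / (p ^ t * (1 - p) ^ (N - t))"
      using q2 p0 by (simp add: exp_diff exp_of_nat_mult exp_ln)
    finally show ?thesis .
  qed
  have "q powr (real N * qentropy q p) / real (N + 1) = (q - 1) ^ t * (1 / real (N + 1)) / (p ^ t * (1 - p) ^ (N - t))"
    unfolding key by simp
  also have "\<dots> \<le> (q - 1) ^ t * (real (N choose t) * p ^ t * (1 - p) ^ (N - t)) / (p ^ t * (1 - p) ^ (N - t))"
    using m q2 pos by (intro divide_right_mono mult_left_mono) auto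
  also have "\<dots> = real (N choose t) * (q - 1) ^ t * (p ^ t * (1 - p) ^ (N - t)) / (p ^ t * (1 - p) ^ (N - t))"
    by (simp add: mult_ac)
  also have "\<dots> = real (N choose t) * (q - 1) ^ t"
    by (rule nonzero_mult_div_cancel_right) (rule dual_order.strict_implies_not_eq[OF pos])
  finally have "q powr (real N * qentropy q p) / real (N + 1) \<le> real (card {f\<in>(WS D :: ('a \<Rightarrow> 'f) set). wt D f = t})"
    unfolding c .
  then show ?thesis unfolding q_def N_def p_def .
qed

lemma gconv_diff2: "gconv x (y - y') = gconv x y - gconv x y'"
  unfolding gconv_def by (auto simp: fun_eq_iff algebra_simps sum_subtractf)

lemma gconv_zero2: "gconv x 0 = 0"
  unfolding gconv_def by (auto simp: fun_eq_iff)

lemma gconv_scale2: "gconv x (\<lambda>z. c * y z) = (\<lambda>z. c * gconv x y z)"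
  unfolding gconv_def by (auto simp: fun_eq_iff algebra_simps sum_distrib_left)

lemma gconv_shift2: "gconv x (\<lambda>w. y (w + g)) = (\<lambda>z. gconv x y (z + g))"
  unfolding gconv_def by (auto simp: fun_eq_iff algebra_simps)

definition unitg :: "'g::{finite,ab_group_add} \<Rightarrow> 'f::{finite,field}" where
  "unitg = (\<lambda>w. if w = 0 then 1 else 0)"

lemma gconv_unit2: "gconv x unitg = x"
proof -
  have "gconv x unitg z = x z" for z
  proof -
    have "gconv x unitg z = (\<Sum>u\<in>UNIV. if u = z then x u else 0)"
      unfolding gconv_def unitg_def by (intro sum.cong refl) auto
    then show ?thesis by simp
  qed
  then show ?thesis by auto
qed

lemma gconv_unit1:
  fixes y :: "'g::{finite,ab_group_add} \<Rightarrow> 'f::{finite,field}"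
  shows "gconv unitg y = y"
proof -
  have "gconv unitg y z = y z" for z
  proof -
    have "gconv unitg y z = (\<Sum>u\<in>(UNIV::'g set). if u = 0 then y z else 0)"
      unfolding gconv_def unitg_def by (rule sum.cong) auto
    then show ?thesis by simp
  qed
  then show ?thesis by auto
qed

definition subsp :: "('g \<Rightarrow> 'f::field) set \<Rightarrow> bool" where
  "subsp S \<longleftrightarrow> 0 \<in> S \<and> (\<forall>x\<in>S. \<forall>y\<in>S. x - y \<in> S) \<and> (\<forall>c. \<forall>x\<in>S. (\<lambda>z. c * x z) \<in> S)"

definition shinv :: "('g::ab_group_add \<Rightarrow> 'f) set \<Rightarrow> bool" where
  "shinv S \<longleftrightarrow> (\<forall>g. \<forall>x\<in>S. (\<lambda>z. x (z + g)) \<in> S)"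

lemma subsp_0: "subsp S \<Longrightarrow> 0 \<in> S"
  unfolding subsp_def by (elim conjE)

lemma subsp_diff: "subsp S \<Longrightarrow> x \<in> S \<Longrightarrow> y \<in> S \<Longrightarrow> x - y \<in> S"
  unfolding subsp_def by (elim conjE) (erule ballE[of _ _ x], erule ballE[of _ _ y], simp_all)

lemma subsp_scale: "subsp S \<Longrightarrow> x \<in> S \<Longrightarrow> (\<lambda>z. c * x z) \<in> S"
  unfolding subsp_def by (elim conjE) (drule spec[of _ c], erule ballE[of _ _ x], simp_all)

lemma subspI: "0 \<in> S \<Longrightarrow> (\<And>x y. x \<in> S \<Longrightarrow> y \<in> S \<Longrightarrow> x - y \<in> S)
   \<Longrightarrow> (\<And>c x. x \<in> S \<Longrightarrow> (\<lambda>z. c * x z) \<in> S) \<Longrightarrow> subsp S"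
  unfolding subsp_def by blast

lemma subsp_add: "subsp S \<Longrightarrow> x \<in> S \<Longrightarrow> y \<in> S \<Longrightarrow> x + y \<in> S"
proof -
  assume S: "subsp S" "x \<in> S" "y \<in> S"
  then have "0 - y \<in> S" using subsp_0[OF S(1)] subsp_diff[OF S(1)] by blast
  then have "x - (0 - y) \<in> S" using S subsp_diff by blast
  then show ?thesis by simp
qed

definition Ib :: "nat \<Rightarrow> (nat \<Rightarrow> 'g::{finite,ab_group_add} \<Rightarrow> 'f::{finite,field}) \<Rightarrow> ('g \<Rightarrow> 'f) set" where
  "Ib k b = {v. \<exists>a. v = (\<lambda>z. \<Sum>i<k. gconv (b i) (a i) z)}"

lemma Ib_subsp: "subsp (Ib k b)"
  unfolding subsp_def
proof (intro conjI ballI allI)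
  show "0 \<in> Ib k b" unfolding Ib_def
    by (rule CollectI, rule exI[of _ "\<lambda>_. 0"]) (simp add: gconv_zero2 fun_eq_iff)
next
  fix x y assume "x \<in> Ib k b" "y \<in> Ib k b"
  then obtain a a' where a: "x = (\<lambda>z. \<Sum>i<k. gconv (b i) (a i) z)" "y = (\<lambda>z. \<Sum>i<k. gconv (b i) (a' i) z)"
    unfolding Ib_def by auto
  show "x - y \<in> Ib k b" unfolding Ib_def
    by (rule CollectI, rule exI[of _ "\<lambda>i. a i - a' i"]) (simp add: a gconv_diff2 fun_eq_iff sum_subtractf)
next
  fix c x assume "x \<in> Ib k b"
  then obtain a where a: "x = (\<lambda>z. \<Sum>i<k. gconv (b i) (a i) z)"
    unfolding Ib_def by auto
  show "(\<lambda>z. c * x z) \<in> Ib k b" unfolding Ib_def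
    by (rule CollectI, rule exI[of _ "\<lambda>i w. c * a i w"]) (simp add: a gconv_scale2 fun_eq_iff sum_distrib_left)
qed

lemma Ib_shinv: "shinv (Ib k b)"
  unfolding shinv_def
proof (intro allI ballI)
  fix g x assume "x \<in> Ib k b"
  then obtain a where a: "x = (\<lambda>z. \<Sum>i<k. gconv (b i) (a i) z)"
    unfolding Ib_def by auto
  show "(\<lambda>z. x (z + g)) \<in> Ib k b" unfolding Ib_def
    by (rule CollectI, rule exI[of _ "\<lambda>i w. a i (w + g)"]) (simp add: a gconv_shift2 fun_eq_iff)
qed

lemma Ib_mem: "i < k \<Longrightarrow> b i \<in> Ib k b"
proof -
  assume i: "i < k"
  have "(\<lambda>z. \<Sum>i'<k. gconv (b i') (if i' = i then unitg else 0) z) = b i"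
  proof
    fix z
    have "(\<Sum>i'<k. gconv (b i') (if i' = i then unitg else 0) z) = (\<Sum>i'<k. if i' = i then b i z else 0)"
      by (intro sum.cong refl) (auto simp: gconv_unit2 gconv_zero2)
    then show "(\<Sum>i'<k. gconv (b i') (if i' = i then unitg else 0) z) = b i z" using i by simp
  qed
  then show ?thesis unfolding Ib_def by (intro CollectI exI[of _ "\<lambda>i'. if i' = i then unitg else 0"]) simp
qed

lemma Ib_UNIV: "0 < k \<Longrightarrow> b 0 = unitg \<Longrightarrow> Ib k b = UNIV"
proof -
  assume k: "0 < k" and b0: "b 0 = unitg"
  have "v \<in> Ib k b" for v
  proof -
    have "(\<lambda>z. \<Sum>i<k. gconv (b i) (if i = 0 then v else 0) z) = v"
    proof
      fix z
      have "(\<Sum>i<k. gconv (b i) (if i = 0 then v else 0) z) = (\<Sum>i<k. if i = 0 then v z else 0)"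
        by (intro sum.cong refl) (auto simp: b0 gconv_unit1 gconv_zero2)
      then show "(\<Sum>i<k. gconv (b i) (if i = 0 then v else 0) z) = v z" using k by simp
    qed
    then show ?thesis unfolding Ib_def by (intro CollectI exI[of _ "\<lambda>i. if i = 0 then v else 0"]) simp
  qed
  then show ?thesis by auto
qed

definition colI :: "nat \<Rightarrow> 'b set \<Rightarrow> (nat \<Rightarrow> 'b::zero) set" where
  "colI n I = {c. \<forall>j. (j < n \<longrightarrow> c j \<in> I) \<and> (\<not> j < n \<longrightarrow> c j = 0)}"

lemma colI_Suc: "colI (Suc n) I = (\<lambda>(v,c). c(n := v)) ` (I \<times> colI n I)"
proof (intro equalityI subsetI)
  fix c assume "c \<in> colI (Suc n) I"
  then have "c = (\<lambda>(v,c). c(n := v)) (c n, c(n := 0))" "(c n, c(n := 0)) \<in> I \<times> colI n I"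
    unfolding colI_def by auto
  then show "c \<in> (\<lambda>(v,c). c(n := v)) ` (I \<times> colI n I)" by blast
next
  fix c assume "c \<in> (\<lambda>(v,c). c(n := v)) ` (I \<times> colI n I)"
  then show "c \<in> colI (Suc n) I" unfolding colI_def by auto
qed

lemma card_colI: "finite I \<Longrightarrow> card (colI n I) = card I ^ n"
proof (induction n)
  case 0
  have "colI 0 I = {\<lambda>_. 0}" unfolding colI_def by auto
  then show ?case by simp
next
  case (Suc n)
  have inj: "inj_on (\<lambda>(v,c). c(n := v)) (I \<times> colI n I)"
    unfolding inj_on_def colI_def by (auto simp: fun_eq_iff)
  show ?case unfolding colI_Suc card_image[OF inj] using Suc by (simp add: card_cartesian_product)
qed

lemma finite_colI: "finite I \<Longrightarrow> finite (colI n I)"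
proof (induction n)
  case 0
  have "colI 0 I = {\<lambda>_. 0}" unfolding colI_def by auto
  then show ?case by simp
next
  case (Suc n)
  then show ?case unfolding colI_Suc by auto
qed

lemma gvecs_colI: "gvecs k = colI k UNIV"
  unfolding gvecs_def colI_def by (auto simp: zero_fun_def)

lemma gmats_eq: "gmats k n = colI k (colI n UNIV)"
  unfolding gmats_def colI_def by (auto simp: zero_fun_def fun_eq_iff) (metis not_less)

lemma real_card_filter: "finite A \<Longrightarrow> real (card {x\<in>A. P x}) = (\<Sum>x\<in>A. if P x then 1 else 0)"
  by (simp add: sum.If_cases Int_def)

lemma vecmat_diff: "vecmat k n b (A - A') = vecmat k n b A - vecmat k n b A'"
  unfolding vecmat_def by (auto simp: fun_eq_iff gconv_diff2 sum_subtractf)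

lemma vecmat_image:
  "vecmat k n b ` colI k (colI n UNIV) = colI n (Ib k b)"
proof (intro equalityI subsetI)
  fix c assume "c \<in> vecmat k n b ` colI k (colI n UNIV)"
  then obtain A where c: "c = vecmat k n b A" by auto
  show "c \<in> colI n (Ib k b)" unfolding colI_def
  proof (intro CollectI allI conjI impI)
    fix j assume "j < n"
    then show "c j \<in> Ib k b" unfolding c vecmat_def Ib_def by (auto intro: exI[of _ "\<lambda>i. A i j"])
  next
    fix j assume "\<not> j < n"
    then show "c j = 0" unfolding c vecmat_def by (simp add: zero_fun_def)
  qed
next
  fix c assume c: "c \<in> colI n (Ib k b)"
  have "\<forall>j. \<exists>a. j < n \<longrightarrow> c j = (\<lambda>z. \<Sum>i<k. gconv (b i) (a i) z)"
    using c unfolding colI_def Ib_def by auto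
  then obtain fa where fa: "\<And>j. j < n \<Longrightarrow> c j = (\<lambda>z. \<Sum>i<k. gconv (b i) (fa j i) z)"
    by metis
  define A where "A = (\<lambda>i j. if i < k \<and> j < n then fa j i else 0)"
  have A: "A \<in> colI k (colI n UNIV)" unfolding A_def colI_def by auto
  have "vecmat k n b A = c"
  proof
    fix j
    show "vecmat k n b A j = c j"
    proof (cases "j < n")
      case True
      then show ?thesis unfolding vecmat_def fa[OF True] A_def by (auto intro!: sum.cong)
    next
      case False
      then show ?thesis using c unfolding vecmat_def colI_def by (auto simp: zero_fun_def)
    qed
  qed
  then show "c \<in> vecmat k n b ` colI k (colI n UNIV)" using A by blast
qed

lemma fiber_count:
  fixes \<phi> :: "'a::ab_group_add \<Rightarrow> 'b::ab_group_add"
  assumes fin: "finite M" and M0: "0 \<in> M" and Md: "\<And>x y. x \<in> M \<Longrightarrow> y \<in> M \<Longrightarrow> x - y \<in> M"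
    and hom: "\<And>x y. x \<in> M \<Longrightarrow> y \<in> M \<Longrightarrow> \<phi> (x - y) = \<phi> x - \<phi> y"
  shows "card {x\<in>M. P (\<phi> x)} * card (\<phi> ` M) = card M * card {y\<in>\<phi> ` M. P y}"
proof -
  define K where "K = {u\<in>M. \<phi> u = 0}"
  have fib: "card {x\<in>M. \<phi> x = y} = card K" if "y \<in> \<phi> ` M" for y
  proof -
    obtain x0 where x0: "x0 \<in> M" "y = \<phi> x0" using \<open>y \<in> \<phi> ` M\<close> by auto
    have phi0: "\<phi> 0 = 0" using hom[OF M0 M0] by simp
    have nx0: "0 - x0 \<in> M" using Md[OF M0 x0(1)] .
    have "{x\<in>M. \<phi> x = y} = (\<lambda>u. u + x0) ` K"
    proof (intro equalityI subsetI)
      fix x assume x: "x \<in> {x\<in>M. \<phi> x = y}"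
      then have "x - x0 \<in> K" unfolding K_def using Md[of x x0] hom[of x x0] x0 by auto
      moreover have "x = (x - x0) + x0" by simp
      ultimately show "x \<in> (\<lambda>u. u + x0) ` K" by blast
    next
      fix x assume "x \<in> (\<lambda>u. u + x0) ` K"
      then obtain u where u: "u \<in> M" "\<phi> u = 0" "x = u + x0" unfolding K_def by auto
      have "x = u - (0 - x0)" using u by simp
      then have "x \<in> M" "\<phi> x = \<phi> u - \<phi> (0 - x0)" using Md[OF u(1) nx0] hom[OF u(1) nx0] by auto
      moreover have "\<phi> (0 - x0) = 0 - y" using hom[OF M0 x0(1)] phi0 x0 by simp
      ultimately show "x \<in> {x\<in>M. \<phi> x = y}" using u by simp
    qed
    moreover have "inj_on (\<lambda>u. u + x0) K" by (auto simp: inj_on_def)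
    ultimately show ?thesis by (simp add: card_image)
  qed
  have gen: "card {x\<in>M. Q (\<phi> x)} = card {y\<in>\<phi> ` M. Q y} * card K" for Q
  proof -
    have f1: "finite {x\<in>M. Q (\<phi> x)}" using fin by simp
    have "card {x\<in>M. Q (\<phi> x)} = (\<Sum>x\<in>{x\<in>M. Q (\<phi> x)}. 1)" by simp
    also have "\<dots> = (\<Sum>y\<in>\<phi> ` {x\<in>M. Q (\<phi> x)}. \<Sum>x\<in>{x' \<in> {x\<in>M. Q (\<phi> x)}. \<phi> x' = y}. 1)"
      by (rule sum.image_gen[OF f1])
    also have "\<phi> ` {x\<in>M. Q (\<phi> x)} = {y\<in>\<phi> ` M. Q y}" by auto
    also have "(\<Sum>y\<in>{y\<in>\<phi> ` M. Q y}. \<Sum>x\<in>{x' \<in> {x\<in>M. Q (\<phi> x)}. \<phi> x' = y}. (1::nat))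
        = (\<Sum>y\<in>{y\<in>\<phi> ` M. Q y}. card K)"
    proof (intro sum.cong refl)
      fix y assume y: "y \<in> {y\<in>\<phi> ` M. Q y}"
      then have "{x' \<in> {x\<in>M. Q (\<phi> x)}. \<phi> x' = y} = {x\<in>M. \<phi> x = y}" by auto
      then show "(\<Sum>x\<in>{x' \<in> {x\<in>M. Q (\<phi> x)}. \<phi> x' = y}. (1::nat)) = card K"
        using fib y by simp
    qed
    also have "\<dots> = card {y\<in>\<phi> ` M. Q y} * card K" by simp
    finally show ?thesis .
  qed
  have "card M = card (\<phi> ` M) * card K" using gen[of "\<lambda>_. True"] by simp
  then show ?thesis using gen[of P] by (simp add: mult_ac)
qed

definition Qp :: "nat \<Rightarrow> real \<Rightarrow> (nat \<Rightarrow> 'g::{finite,ab_group_add} \<Rightarrow> 'f::{finite,field}) \<Rightarrow> bool" where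
  "Qp n \<delta> c \<longleftrightarrow> 1 \<le> hweight n c \<and> real (hweight n c) \<le> real CARD('g) * real n * \<delta>"

lemma finite_colI_UNIV: "finite (colI n (UNIV :: ('g::finite \<Rightarrow> 'f::{finite,zero}) set))"
  by (rule finite_colI) simp

lemma colI_diff:
  fixes I :: "('b::ab_group_add) set"
  assumes "\<And>u v. u \<in> I \<Longrightarrow> v \<in> I \<Longrightarrow> u - v \<in> I" "x \<in> colI n I" "y \<in> colI n I"
  shows "x - y \<in> colI n I"
  using assms unfolding colI_def by simp

lemma frac_eq: "(a::real) * b = c * d \<Longrightarrow> 0 < c \<Longrightarrow> 0 < b \<Longrightarrow> a / c = d / b"
  by (simp add: field_simps)

lemma ENhat_eq:
  "ENhat TYPE('g::{finite,ab_group_add} \<Rightarrow> 'f::{finite,field}) k n \<delta>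
    = (\<Sum>b\<in>(gvecs k :: (nat \<Rightarrow> 'g \<Rightarrow> 'f) set).
        real (card {c\<in>colI n (Ib k b). Qp n \<delta> c}) / real (card (colI n (Ib k b))))"
proof -
  let ?M = "colI k (colI n UNIV) :: (nat \<Rightarrow> nat \<Rightarrow> 'g \<Rightarrow> 'f) set"
  let ?V = "colI k UNIV :: (nat \<Rightarrow> 'g \<Rightarrow> 'f) set"
  have finM: "finite ?M" by (intro finite_colI finite_colI_UNIV)
  have finV: "finite ?V" by (intro finite_colI) simp
  have M0: "0 \<in> ?M" unfolding colI_def by auto
  have Md: "x - y \<in> ?M" if "x \<in> ?M" "y \<in> ?M" for x y
    by (rule colI_diff[OF _ that]) (rule colI_diff, simp_all)
  have cM: "0 < card ?M" using finM M0 card_gt_0_iff by blast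
  have "ENhat TYPE('g \<Rightarrow> 'f) k n \<delta> = (\<Sum>A\<in>?M. real (card {b\<in>?V. Qp n \<delta> (vecmat k n b A)})) / real (card ?M)"
    unfolding ENhat_def Nhat_def gmats_eq gvecs_colI Qp_def ..
  also have "(\<Sum>A\<in>?M. real (card {b\<in>?V. Qp n \<delta> (vecmat k n b A)}))
      = (\<Sum>A\<in>?M. \<Sum>b\<in>?V. if Qp n \<delta> (vecmat k n b A) then 1 else 0)"
    by (intro sum.cong refl real_card_filter finV)
  also have "\<dots> = (\<Sum>b\<in>?V. \<Sum>A\<in>?M. if Qp n \<delta> (vecmat k n b A) then 1 else 0)"
    by (rule sum.swap)
  also have "\<dots> = (\<Sum>b\<in>?V. real (card {A\<in>?M. Qp n \<delta> (vecmat k n b A)}))"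
    by (intro sum.cong refl real_card_filter[symmetric] finM)
  also have "(\<Sum>b\<in>?V. real (card {A\<in>?M. Qp n \<delta> (vecmat k n b A)})) / real (card ?M)
     = (\<Sum>b\<in>?V. real (card {A\<in>?M. Qp n \<delta> (vecmat k n b A)}) / real (card ?M))"
    by (rule sum_divide_distrib)
  finally have e1: "ENhat TYPE('g \<Rightarrow> 'f) k n \<delta> = (\<Sum>b\<in>?V. real (card {A\<in>?M. Qp n \<delta> (vecmat k n b A)}) / real (card ?M))" .
  have e2: "real (card {A\<in>?M. Qp n \<delta> (vecmat k n b A)}) / real (card ?M)
         = real (card {c\<in>colI n (Ib k b). Qp n \<delta> c}) / real (card (colI n (Ib k b)))" for b
  proof -
    have fc: "card {A\<in>?M. Qp n \<delta> (vecmat k n b A)} * card (vecmat k n b ` ?M) = card ?M * card {c\<in>vecmat k n b ` ?M. Qp n \<delta> c}"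
      apply (rule fiber_count[OF finM M0])
       apply (erule (1) Md)
      apply (rule vecmat_diff)
      done
    have "vecmat k n b 0 \<in> vecmat k n b ` ?M" using M0 by (rule imageI)
    then have ci: "0 < card (vecmat k n b ` ?M)" using finM card_gt_0_iff by blast
    have "real (card {A\<in>?M. Qp n \<delta> (vecmat k n b A)}) * real (card (vecmat k n b ` ?M)) = real (card ?M) * real (card {c\<in>vecmat k n b ` ?M. Qp n \<delta> c})"
      by (simp only: of_nat_mult[symmetric] fc)
    then have "real (card {A\<in>?M. Qp n \<delta> (vecmat k n b A)}) / real (card ?M) = real (card {c\<in>vecmat k n b ` ?M. Qp n \<delta> c}) / real (card (vecmat k n b ` ?M))"
      by (rule frac_eq) (simp_all only: of_nat_0_less_iff cM ci)
    then show ?thesis unfolding vecmat_image .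
  qed
  show ?thesis unfolding e1 e2 gvecs_colI ..
qed

lemma info_set_aux:
  fixes T :: "'g set"
  assumes "finite T"
  shows "\<forall>S :: ('g \<Rightarrow> 'f::{finite,field}) set. subsp S \<longrightarrow> (\<forall>f\<in>S. \<forall>z. z \<notin> T \<longrightarrow> f z = 0) \<longrightarrow>
          (\<exists>J\<subseteq>T. card S = CARD('f) ^ card J \<and> (\<forall>f\<in>S. (\<forall>z\<in>J. f z = 0) \<longrightarrow> f = 0))"
  using assms
proof (induction T rule: finite_induct)
  case empty
  show ?case
  proof (intro allI impI)
    fix S :: "('g \<Rightarrow> 'f) set" assume S: "subsp S" "\<forall>f\<in>S. \<forall>z. z \<notin> {} \<longrightarrow> f z = 0"
    have "f = 0" if "f \<in> S" for f using S(2) that by (auto simp: fun_eq_iff)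
    then have "S = {0}" using subsp_0[OF S(1)] by blast
    then show "\<exists>J\<subseteq>{}. card S = CARD('f) ^ card J \<and> (\<forall>f\<in>S. (\<forall>z\<in>J. f z = 0) \<longrightarrow> f = 0)"
      by auto
  qed
next
  case (insert a T)
  show ?case
  proof (intro allI impI)
    fix S :: "('g \<Rightarrow> 'f) set" assume S: "subsp S" and van: "\<forall>f\<in>S. \<forall>z. z \<notin> insert a T \<longrightarrow> f z = 0"
    define S0 where "S0 = {f\<in>S. f a = 0}"
    have S0: "subsp S0"
    proof (rule subspI)
      show "0 \<in> S0" unfolding S0_def using subsp_0[OF S] by simp
      show "x - y \<in> S0" if "x \<in> S0" "y \<in> S0" for x y
        using that subsp_diff[OF S, of x y] unfolding S0_def by simp
      show "(\<lambda>z. c * x z) \<in> S0" if "x \<in> S0" for c x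
        using that subsp_scale[OF S, of x c] unfolding S0_def by simp
    qed
    have van0: "\<forall>f\<in>S0. \<forall>z. z \<notin> T \<longrightarrow> f z = 0" using van unfolding S0_def by auto
    have ex: "\<exists>J\<subseteq>T. card S0 = CARD('f) ^ card J \<and> (\<forall>f\<in>S0. (\<forall>z\<in>J. f z = 0) \<longrightarrow> f = 0)"
      by (rule insert.IH[rule_format, OF S0]) (use van0 in blast)
    obtain J0 where J0: "J0 \<subseteq> T" "card S0 = CARD('f) ^ card J0" "\<forall>f\<in>S0. (\<forall>z\<in>J0. f z = 0) \<longrightarrow> f = 0"
      using ex by (elim exE conjE) (rule that)
    show "\<exists>J\<subseteq>insert a T. card S = CARD('f) ^ card J \<and> (\<forall>f\<in>S. (\<forall>z\<in>J. f z = 0) \<longrightarrow> f = 0)"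
    proof (cases "\<forall>f\<in>S. f a = 0")
      case True
      then have "S0 = S" unfolding S0_def by auto
      then show ?thesis using J0(2,3) J0(1) by (intro exI[of _ J0] conjI) auto
    next
      case False
      then obtain f1 where f1: "f1 \<in> S" "f1 a \<noteq> 0" by auto
      define e where "e = (\<lambda>z. inverse (f1 a) * f1 z)"
      have eS: "e \<in> S" unfolding e_def by (rule subsp_scale[OF S f1(1)])
      have ea: "e a = 1" using f1 unfolding e_def by simp
      define \<Psi> where "\<Psi> = (\<lambda>(v::'f, g::'g \<Rightarrow> 'f). g + (\<lambda>z. v * e z))"
      have sc: "(\<lambda>z. v * e z) \<in> S" for v by (rule subsp_scale[OF S eS])
      have img: "\<Psi> ` (UNIV \<times> S0) = S"
      proof (intro equalityI subsetI)
        fix f assume "f \<in> \<Psi> ` (UNIV \<times> S0)"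
        then obtain v g where "g \<in> S0" "f = g + (\<lambda>z. v * e z)" unfolding \<Psi>_def by auto
        then show "f \<in> S" using subsp_add[OF S _ sc] unfolding S0_def by auto
      next
        fix f assume f: "f \<in> S"
        have "f - (\<lambda>z. f a * e z) \<in> S" by (rule subsp_diff[OF S f sc])
        then have "f - (\<lambda>z. f a * e z) \<in> S0" unfolding S0_def using ea by simp
        moreover have "f = \<Psi> (f a, f - (\<lambda>z. f a * e z))" unfolding \<Psi>_def by (auto simp: fun_eq_iff)
        ultimately show "f \<in> \<Psi> ` (UNIV \<times> S0)" by blast
      qed
      have inj: "inj_on \<Psi> (UNIV \<times> S0)"
      proof (rule inj_onI, clarify)
        fix v g v' g' assume g: "g \<in> S0" "g' \<in> S0" and eq: "\<Psi> (v, g) = \<Psi> (v', g')"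
        have "g a + v * e a = g' a + v' * e a" using fun_cong[OF eq, of a] unfolding \<Psi>_def by simp
        then have vv: "v = v'" using g ea unfolding S0_def by simp
        then have "g = g'" using eq unfolding \<Psi>_def by (auto simp: fun_eq_iff)
        then show "v = v' \<and> g = g'" using vv by simp
      qed
      have aJ0: "a \<notin> J0" using J0(1) insert.hyps by auto
      have fJ0: "finite J0" using J0(1) insert.hyps finite_subset by auto
      have "card S = card ((UNIV::'f set) \<times> S0)" using card_image[OF inj] img by simp
      also have "\<dots> = CARD('f) * card S0" by (simp add: card_cartesian_product)
      also have "\<dots> = CARD('f) ^ card (insert a J0)" using J0(2) aJ0 fJ0 by simp
      finally have c: "card S = CARD('f) ^ card (insert a J0)" .
      have i: "\<forall>f\<in>S. (\<forall>z\<in>insert a J0. f z = 0) \<longrightarrow> f = 0"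
        using J0(3) unfolding S0_def by auto
      show ?thesis using c i J0(1) by (intro exI[of _ "insert a J0"]) auto
    qed
  qed
qed

lemma info_set:
  fixes S :: "('g::finite \<Rightarrow> 'f::{finite,field}) set"
  assumes "subsp S"
  shows "\<exists>J. card S = CARD('f) ^ card J \<and> (\<forall>f\<in>S. (\<forall>z\<in>J. f z = 0) \<longrightarrow> f = 0)"
  using info_set_aux[of "UNIV :: 'g set"] assms by auto

lemma card_field2: "2 \<le> CARD('f::{finite,field})"
proof -
  have "card {0::'f, 1} \<le> card (UNIV :: 'f set)" by (rule card_mono) auto
  then show ?thesis by simp
qed

lemma hweight_Sigma: "hweight n c = card (Sigma {..<n} (\<lambda>j. {z. c j z \<noteq> 0}))"
  unfolding hweight_def by (subst card_SigmaI) auto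

lemma shift_avg:
  fixes J :: "'g::{finite,ab_group_add} set"
  shows "(\<Sum>g\<in>UNIV. card {z \<in> (\<lambda>z. z + g) ` J. P z}) = card J * card {z. P z}"
proof -
  have e1: "card {z \<in> (\<lambda>z. z + g) ` J. P z} = (\<Sum>u\<in>J. if P (u + g) then 1 else 0)" for g
  proof -
    have "{z \<in> (\<lambda>z. z + g) ` J. P z} = (\<lambda>z. z + g) ` {u\<in>J. P (u + g)}" by auto
    moreover have "inj_on (\<lambda>z. z + g) {u\<in>J. P (u + g)}" by (auto simp: inj_on_def)
    ultimately have "card {z \<in> (\<lambda>z. z + g) ` J. P z} = card {u\<in>J. P (u + g)}" by (simp add: card_image)
    then show ?thesis by (simp add: sum.If_cases Int_def)
  qed
  have e2: "(\<Sum>g\<in>UNIV. if P (u + g) then 1 else 0) = card {z. P z}" for u :: 'g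
  proof -
    have "(\<Sum>g\<in>UNIV. if P (u + g) then 1 else (0::nat)) = card {g. P (u + g)}"
      by (simp add: sum.If_cases Int_def)
    also have "{g. P (u + g)} = (\<lambda>z. z - u) ` {z. P z}"
    proof (intro equalityI subsetI)
      fix g assume "g \<in> {g. P (u + g)}"
      then show "g \<in> (\<lambda>z. z - u) ` {z. P z}" by (intro image_eqI[of _ _ "u + g"]) auto
    next
      fix g assume "g \<in> (\<lambda>z. z - u) ` {z. P z}"
      then show "g \<in> {g. P (u + g)}" by auto
    qed
    also have "card \<dots> = card {z. P z}" by (rule card_image) (auto simp: inj_on_def)
    finally show ?thesis .
  qed
  have "(\<Sum>g\<in>UNIV. card {z \<in> (\<lambda>z. z + g) ` J. P z}) = (\<Sum>g\<in>UNIV. \<Sum>u\<in>J. if P (u + g) then 1 else 0)"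
    using e1 by simp
  also have "\<dots> = (\<Sum>u\<in>J. \<Sum>g\<in>UNIV. if P (u + g) then 1 else 0)" by (rule sum.swap)
  also have "\<dots> = (\<Sum>u\<in>J. card {z. P z})" using e2 by simp
  finally show ?thesis by simp
qed

lemma low_count:
  fixes I :: "('g::{finite,ab_group_add} \<Rightarrow> 'f::{finite,field}) set" and \<delta> :: real
  assumes I: "subsp I" "shinv I" and d: "0 < \<delta>" "\<delta> < 1 - 1 / real CARD('f)"
  shows "real (card {c\<in>colI n I. real (hweight n c) \<le> real CARD('g) * real n * \<delta>})
           \<le> real CARD('g) * real (card I) powr (real n * qentropy (real CARD('f)) \<delta>)"
proof -
  obtain J where cJ: "card I = CARD('f) ^ card J" and injJ: "\<forall>f\<in>I. (\<forall>z\<in>J. f z = 0) \<longrightarrow> f = 0"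
    using info_set[OF I(1)] by blast
  define H where "H = qentropy (real CARD('f)) \<delta>"
  define q where "q = real CARD('f)"
  have q2: "2 \<le> q" unfolding q_def using card_field2[where 'f='f] by linarith
  define dd where "dd = card J"
  define Dg where "Dg g = {..<n} \<times> ((\<lambda>z. z + g) ` J)" for g :: 'g
  have cDg: "card (Dg g) = n * dd" for g
  proof -
    have "card ((\<lambda>z. z + g) ` J) = card J" by (rule card_image) (auto simp: inj_on_def)
    then show ?thesis unfolding Dg_def dd_def by (simp add: card_cartesian_product)
  qed
  have fDg: "finite (Dg g)" for g unfolding Dg_def by auto
  define R where "R g c = (\<lambda>x. if x \<in> Dg g then c (fst x) (snd x) else (0::'f))" for g and c :: "nat \<Rightarrow> 'g \<Rightarrow> 'f"
  define wtg where "wtg g c = (\<Sum>j<n. card {z \<in> (\<lambda>z. z + g) ` J. c j z \<noteq> 0})" for g and c :: "nat \<Rightarrow> 'g \<Rightarrow> 'f"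
  define L where "L = {c\<in>colI n I. real (hweight n c) \<le> real CARD('g) * real n * \<delta>}"
  define Lg where "Lg g = {c\<in>colI n I. real (wtg g c) \<le> \<delta> * real (card (Dg g))}" for g
  have RW: "R g c \<in> WS (Dg g)" for g c unfolding R_def WS_def by auto
  have Rwt: "wt (Dg g) (R g c) = wtg g c" for g c
  proof -
    have "{x\<in>Dg g. R g c x \<noteq> 0} = Sigma {..<n} (\<lambda>j. {z \<in> (\<lambda>z. z + g) ` J. c j z \<noteq> 0})"
      unfolding R_def Dg_def by auto
    then show ?thesis unfolding wt_def wtg_def by (simp add: card_SigmaI)
  qed
  have Rinj: "inj_on (R g) (colI n I)" for g
  proof (rule inj_onI)
    fix c c' assume c: "c \<in> colI n I" "c' \<in> colI n I" and eq: "R g c = R g c'"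
    show "c = c'"
    proof
      fix j
      show "c j = c' j"
      proof (cases "j < n")
        case False
        then show ?thesis using c unfolding colI_def by auto
      next
        case True
        define h where "h = c j - c' j"
        have "c j \<in> I" "c' j \<in> I" using c True unfolding colI_def by auto
        then have hI: "h \<in> I" unfolding h_def by (rule subsp_diff[OF I(1)])
        define hs where "hs = (\<lambda>w. h (w + g))"
        have hsI: "hs \<in> I" using I(2) hI unfolding shinv_def hs_def by auto
        have "hs u = 0" if "u \<in> J" for u
        proof -
          have "(j, u + g) \<in> Dg g" unfolding Dg_def using True that by auto
          then have "c j (u + g) = c' j (u + g)" using fun_cong[OF eq, of "(j, u + g)"] unfolding R_def by simp
          then show ?thesis unfolding hs_def h_def by simp
        qed
        then have "hs = 0" using injJ hsI by auto
        then have "h w = 0" for w using fun_cong[of hs 0 "w - g"] unfolding hs_def by simp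
        then show ?thesis unfolding h_def by (auto simp: fun_eq_iff)
      qed
    qed
  qed
  have avg: "(\<Sum>g\<in>UNIV. wtg g c) = dd * hweight n c" for c
  proof -
    have "(\<Sum>g\<in>UNIV. wtg g c) = (\<Sum>j<n. \<Sum>g\<in>UNIV. card {z \<in> (\<lambda>z. z + g) ` J. c j z \<noteq> 0})"
      unfolding wtg_def by (rule sum.swap)
    also have "\<dots> = (\<Sum>j<n. dd * card {z. c j z \<noteq> 0})" unfolding dd_def by (simp add: shift_avg)
    finally show ?thesis unfolding hweight_def by (simp add: sum_distrib_left)
  qed
  have cover: "L \<subseteq> (\<Union>g. Lg g)"
  proof
    fix c assume cL: "c \<in> L"
    show "c \<in> (\<Union>g. Lg g)"
    proof (rule ccontr)
      assume "c \<notin> (\<Union>g. Lg g)"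
      then have gt: "\<delta> * (real n * real dd) < real (wtg g c)" for g
        using cL unfolding L_def Lg_def cDg by (auto simp: not_le)
      have "(\<Sum>g\<in>(UNIV::'g set). \<delta> * (real n * real dd)) < (\<Sum>g\<in>UNIV. real (wtg g c))"
        by (rule sum_strict_mono) (simp_all only: gt finite UNIV_not_empty, simp)
      also have "\<dots> = real dd * real (hweight n c)" using avg[of c] by (metis of_nat_sum of_nat_mult)
      also have "\<dots> \<le> real dd * (real CARD('g) * real n * \<delta>)"
        using cL unfolding L_def by (intro mult_left_mono) auto
      finally show False by (simp add: algebra_simps)
    qed
  qed
  have bound_g: "real (card (Lg g)) \<le> q powr (real (n * dd) * H)" for g
  proof -
    have "card (Lg g) \<le> card {u\<in>(WS (Dg g) :: (nat \<times> 'g \<Rightarrow> 'f) set). real (wt (Dg g) u) \<le> \<delta> * real (card (Dg g))}"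
    proof (rule card_inj_on_le)
      show "inj_on (R g) (Lg g)" using Rinj by (rule inj_on_subset) (auto simp: Lg_def)
      show "R g ` Lg g \<subseteq> {u\<in>WS (Dg g). real (wt (Dg g) u) \<le> \<delta> * real (card (Dg g))}"
        using RW Rwt unfolding Lg_def by auto
      show "finite {u\<in>(WS (Dg g) :: (nat \<times> 'g \<Rightarrow> 'f) set). real (wt (Dg g) u) \<le> \<delta> * real (card (Dg g))}"
        using finite_WS[OF fDg[of g], where 'f='f] by auto
    qed
    also have "real \<dots> \<le> q powr (real (card (Dg g)) * H)"
      unfolding q_def H_def by (rule chernoff[OF fDg card_field2 d])
    finally show ?thesis unfolding cDg by simp
  qed
  have "card L \<le> card (\<Union>g. Lg g)"
  proof (rule card_mono[OF _ cover])
    have "finite (colI n I)" by (rule finite_colI) simp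
    then show "finite (\<Union>g. Lg g)" by (auto simp: Lg_def)
  qed
  also have "\<dots> \<le> (\<Sum>g\<in>UNIV. card (Lg g))" by (rule card_UN_le) simp
  finally have "real (card L) \<le> (\<Sum>g\<in>(UNIV::'g set). real (card (Lg g)))" by (metis of_nat_le_iff of_nat_sum)
  also have "\<dots> \<le> (\<Sum>g\<in>(UNIV::'g set). q powr (real (n * dd) * H))" by (intro sum_mono bound_g)
  also have "\<dots> = real CARD('g) * q powr (real (n * dd) * H)" by simp
  also have "q powr (real (n * dd) * H) = real (card I) powr (real n * H)"
  proof -
    have "real (card I) = q powr real dd" unfolding cJ q_def dd_def using q2 q_def
      by (simp add: powr_realpow)
    then show ?thesis using q2 by (simp add: powr_powr mult_ac)
  qed
  finally show ?thesis unfolding L_def H_def .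
qed

lemma finite_colI_any: "finite (colI n (I :: ('g::finite \<Rightarrow> 'f::{finite,zero}) set))"
  by (rule finite_colI) simp

lemma term_upper:
  fixes b :: "nat \<Rightarrow> 'g::{finite,ab_group_add} \<Rightarrow> 'f::{finite,field}" and \<delta> :: real
  assumes d: "0 < \<delta>" "\<delta> < 1 - 1 / real CARD('f)"
  shows "real (card {c\<in>colI n (Ib k b). Qp n \<delta> c}) / real (card (colI n (Ib k b)))
     \<le> (if Ib k b = {0} then 0 else real CARD('g) * real (card (Ib k b)) powr (real n * qentropy (real CARD('f)) \<delta> - real n))"
proof (cases "Ib k b = {0}")
  case True
  have "{c\<in>colI n (Ib k b). Qp n \<delta> c} = {}"
  proof -
    have "hweight n c = 0" if "c \<in> colI n (Ib k b)" for c
    proof -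
      have "c j = 0" for j using that True unfolding colI_def by (cases "j < n") auto
      then show ?thesis unfolding hweight_def by simp
    qed
    then show ?thesis unfolding Qp_def by auto
  qed
  then have e: "card {c\<in>colI n (Ib k b). Qp n \<delta> c} = 0" by (metis card.empty)
  show ?thesis unfolding e using True by simp
next
  case False
  let ?I = "Ib k b"
  have fI: "finite ?I" by simp
  have cpos: "0 < card ?I" using subsp_0[OF Ib_subsp[of k b]] fI card_gt_0_iff by blast
  have "card {c\<in>colI n ?I. Qp n \<delta> c} \<le> card {c\<in>colI n ?I. real (hweight n c) \<le> real CARD('g) * real n * \<delta>}"
    by (rule card_mono) (use finite_colI_any[of n "Ib k b"] in \<open>auto simp: Qp_def\<close>)
  then have "real (card {c\<in>colI n ?I. Qp n \<delta> c}) \<le> real CARD('g) * real (card ?I) powr (real n * qentropy (real CARD('f)) \<delta>)"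
    using low_count[OF Ib_subsp Ib_shinv d, of n k b] by linarith
  moreover have den: "real (card (colI n ?I)) = real (card ?I) powr real n"
    using cpos by (simp add: card_colI powr_realpow)
  ultimately have "real (card {c\<in>colI n ?I. Qp n \<delta> c}) / real (card (colI n ?I))
      \<le> real CARD('g) * real (card ?I) powr (real n * qentropy (real CARD('f)) \<delta>) / real (card ?I) powr real n"
    unfolding den by (intro divide_right_mono) auto
  also have "\<dots> = real CARD('g) * real (card ?I) powr (real n * qentropy (real CARD('f)) \<delta> - real n)"
    using cpos by (simp add: powr_diff)
  finally show ?thesis using False by simp
qed

lemma E_upper:
  fixes \<delta> :: real
  assumes d: "0 < \<delta>" "\<delta> < 1 - 1 / real CARD('f::{finite,field})"
    and e: "real k + real n * qentropy (real CARD('f)) \<delta> - real n \<le> 0"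
  shows "ENhat TYPE('g::{finite,ab_group_add} \<Rightarrow> 'f) k n \<delta>
     \<le> real (CARD(('g \<Rightarrow> 'f) set)) * real CARD('g) * 2 powr (real k + real n * qentropy (real CARD('f)) \<delta> - real n)"
proof -
  define H where "H = qentropy (real CARD('f)) \<delta>"
  define V where "V = (gvecs k :: (nat \<Rightarrow> 'g \<Rightarrow> 'f) set)"
  define F where "F I = (if I = {0} then 0 else real CARD('g) * real (card I) powr (real n * H - real n))" for I :: "('g \<Rightarrow> 'f) set"
  define c2 where "c2 = real CARD('g) * 2 powr (real k + real n * H - real n)"
  have finV: "finite V" unfolding V_def gvecs_colI by (intro finite_colI) simp
  have F0: "0 \<le> F I" for I unfolding F_def by auto
  have "ENhat TYPE('g \<Rightarrow> 'f) k n \<delta> \<le> (\<Sum>b\<in>V. F (Ib k b))"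
    unfolding ENhat_eq V_def F_def H_def by (intro sum_mono term_upper[OF d])
  also have "\<dots> = (\<Sum>I\<in>Ib k ` V. \<Sum>b\<in>{x\<in>V. Ib k x = I}. F (Ib k b))"
    by (rule sum.image_gen[OF finV])
  also have "\<dots> \<le> (\<Sum>I\<in>Ib k ` V. c2)"
  proof (intro sum_mono)
    fix I assume "I \<in> Ib k ` V"
    have fI: "finite I" by simp
    have "(\<Sum>b\<in>{x\<in>V. Ib k x = I}. F (Ib k b)) = real (card {x\<in>V. Ib k x = I}) * F I" by simp
    also have "\<dots> \<le> real (card I ^ k) * F I"
    proof (intro mult_right_mono F0)
      have "{x\<in>V. Ib k x = I} \<subseteq> colI k I"
        unfolding V_def gvecs_colI colI_def using Ib_mem by auto
      then have "card {x\<in>V. Ib k x = I} \<le> card (colI k I)" by (intro card_mono finite_colI fI)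
      then show "real (card {x\<in>V. Ib k x = I}) \<le> real (card I ^ k)" using card_colI[OF fI] by simp
    qed
    also have "\<dots> \<le> c2"
    proof (cases "I = {0}")
      case True
      then show ?thesis unfolding F_def c2_def by simp
    next
      case False
      have "0 \<in> I" using \<open>I \<in> Ib k ` V\<close> subsp_0[OF Ib_subsp] by auto
      then obtain y where "y \<in> I" "y \<noteq> 0" using False by auto
      then have "{0, y} \<subseteq> I" using \<open>0 \<in> I\<close> by auto
      then have "card {0, y} \<le> card I" by (intro card_mono fI)
      then have cI2: "2 \<le> real (card I)" using \<open>y \<noteq> 0\<close> by simp
      have "real (card I ^ k) * F I = real CARD('g) * (real (card I) powr real k * real (card I) powr (real n * H - real n))"
        unfolding F_def using False cI2 by (simp add: powr_realpow)
      also have "\<dots> = real CARD('g) * real (card I) powr (real k + real n * H - real n)"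
        by (simp add: powr_add[symmetric] algebra_simps)
      also have "\<dots> \<le> real CARD('g) * 2 powr (real k + real n * H - real n)"
        using e cI2 unfolding H_def by (intro mult_left_mono powr_mono2') auto
      finally show ?thesis unfolding c2_def .
    qed
    finally show "(\<Sum>b\<in>{x\<in>V. Ib k x = I}. F (Ib k b)) \<le> c2" .
  qed
  also have "\<dots> = real (card (Ib k ` V)) * c2" by simp
  also have "\<dots> \<le> real (CARD(('g \<Rightarrow> 'f) set)) * c2"
  proof (intro mult_right_mono)
    have "card (Ib k ` V) \<le> CARD(('g \<Rightarrow> 'f) set)" by (rule card_mono) auto
    then show "real (card (Ib k ` V)) \<le> real (CARD(('g \<Rightarrow> 'f) set))" by (simp only: of_nat_le_iff)
    show "0 \<le> c2" unfolding c2_def by simp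
  qed
  finally show ?thesis unfolding c2_def H_def by (simp add: mult_ac)
qed

lemma count_bij:
  "card {c\<in>colI n (UNIV :: ('g::finite \<Rightarrow> 'f::{finite,zero}) set). hweight n c = t}
   = card {u\<in>(WS ({..<n} \<times> (UNIV::'g set)) :: (nat \<times> 'g \<Rightarrow> 'f) set). wt ({..<n} \<times> UNIV) u = t}"
proof -
  define uc where "uc c = (\<lambda>x. c (fst x) (snd x))" for c :: "nat \<Rightarrow> 'g \<Rightarrow> 'f"
  have inj: "inj_on uc X" for X unfolding uc_def inj_on_def by (auto simp: fun_eq_iff)
  have wt_uc: "wt ({..<n} \<times> UNIV) (uc c) = hweight n c" for c
  proof -
    have "{x\<in>{..<n} \<times> UNIV. uc c x \<noteq> 0} = Sigma {..<n} (\<lambda>j. {z. c j z \<noteq> 0})" unfolding uc_def by auto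
    then show ?thesis unfolding wt_def hweight_Sigma by simp
  qed
  have "uc ` {c\<in>colI n UNIV. hweight n c = t} = {u\<in>(WS ({..<n} \<times> (UNIV::'g set)) :: (nat \<times> 'g \<Rightarrow> 'f) set). wt ({..<n} \<times> UNIV) u = t}"
  proof (intro equalityI subsetI)
    fix u assume "u \<in> uc ` {c\<in>colI n UNIV. hweight n c = t}"
    then obtain c where c: "c \<in> colI n UNIV" "hweight n c = t" "u = uc c" by auto
    then have "u \<in> WS ({..<n} \<times> UNIV)" unfolding WS_def uc_def colI_def by auto
    then show "u \<in> {u\<in>WS ({..<n} \<times> UNIV). wt ({..<n} \<times> UNIV) u = t}" using c wt_uc by auto
  next
    fix u assume u: "u \<in> {u\<in>(WS ({..<n} \<times> (UNIV::'g set)) :: (nat \<times> 'g \<Rightarrow> 'f) set). wt ({..<n} \<times> UNIV) u = t}"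
    define c where "c = (\<lambda>j z. u (j, z))"
    have "uc c = u" unfolding uc_def c_def by simp
    moreover have "c \<in> colI n UNIV" using u unfolding colI_def c_def WS_def by (auto simp: fun_eq_iff)
    moreover have "hweight n c = t" using u wt_uc[of c] \<open>uc c = u\<close> by simp
    ultimately show "u \<in> uc ` {c\<in>colI n UNIV. hweight n c = t}" by blast
  qed
  then show ?thesis using card_image[OF inj] by metis
qed

lemma E_lower:
  fixes \<delta> :: real
  assumes k: "0 < k" and t: "0 < t" "t < CARD('g) * n" "real t \<le> real CARD('g) * real n * \<delta>"
  shows "real CARD('g::{finite,ab_group_add} \<Rightarrow> 'f::{finite,field}) ^ (k - 1)
          * (real CARD('f) powr (real (CARD('g) * n) * qentropy (real CARD('f)) (real t / real (CARD('g) * n)))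
              / real (CARD('g) * n + 1))
          / real CARD('g \<Rightarrow> 'f) ^ n
        \<le> ENhat TYPE('g \<Rightarrow> 'f) k n \<delta>"
proof -
  define V where "V = (gvecs k :: (nat \<Rightarrow> 'g \<Rightarrow> 'f) set)"
  define B0 where "B0 = {b\<in>V. b 0 = unitg}"
  define T where "T (b :: nat \<Rightarrow> 'g \<Rightarrow> 'f) = real (card {c\<in>colI n (Ib k b). Qp n \<delta> c}) / real (card (colI n (Ib k b)))" for b
  define Tf where "Tf = real (card {c\<in>colI n (UNIV :: ('g \<Rightarrow> 'f) set). Qp n \<delta> c}) / real (card (colI n (UNIV :: ('g \<Rightarrow> 'f) set)))"
  have finV: "finite V" unfolding V_def gvecs_colI by (intro finite_colI) simp
  have T0: "0 \<le> T b" for b unfolding T_def by simp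
  have TB0: "T b = Tf" if "b \<in> B0" for b
    using that Ib_UNIV[OF k, of b] unfolding T_def Tf_def B0_def by simp
  have "real (card B0) * Tf = (\<Sum>b\<in>B0. T b)" using TB0 by simp
  also have "\<dots> \<le> (\<Sum>b\<in>V. T b)" by (intro sum_mono2 finV T0) (auto simp: B0_def)
  also have "\<dots> = ENhat TYPE('g \<Rightarrow> 'f) k n \<delta>" unfolding ENhat_eq T_def V_def ..
  finally have E1: "real (card B0) * Tf \<le> ENhat TYPE('g \<Rightarrow> 'f) k n \<delta>" .
  have cB0: "CARD('g \<Rightarrow> 'f) ^ (k - 1) \<le> card B0"
  proof -
    define emb where "emb f = (\<lambda>i. if i = 0 then unitg else f (i - 1))" for f :: "nat \<Rightarrow> 'g \<Rightarrow> 'f"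
    have "emb ` colI (k - 1) UNIV \<subseteq> B0"
      unfolding B0_def V_def gvecs_colI colI_def emb_def using k by auto
    moreover have "inj_on emb (colI (k - 1) UNIV)"
    proof (rule inj_onI)
      fix f g assume "emb f = emb g"
      then have "f j = g j" for j using fun_cong[of "emb f" "emb g" "Suc j"] unfolding emb_def by simp
      then show "f = g" by auto
    qed
    moreover have "finite B0" using finV unfolding B0_def by simp
    ultimately have "card (colI (k - 1) (UNIV :: ('g \<Rightarrow> 'f) set)) \<le> card B0"
      by (metis card_inj_on_le)
    then show ?thesis by (simp add: card_colI)
  qed
  define D where "D = {..<n} \<times> (UNIV :: 'g set)"
  have cD: "card D = CARD('g) * n" unfolding D_def by (simp add: card_cartesian_product)
  have cnt: "real CARD('f) powr (real (CARD('g) * n) * qentropy (real CARD('f)) (real t / real (CARD('g) * n))) / real (CARD('g) * n + 1)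
        \<le> real (card {c\<in>colI n (UNIV :: ('g \<Rightarrow> 'f) set). Qp n \<delta> c})"
  proof -
    have "real CARD('f) powr (real (card D) * qentropy (real CARD('f)) (real t / real (card D))) / real (card D + 1)
        \<le> real (card {u\<in>(WS D :: (nat \<times> 'g \<Rightarrow> 'f) set). wt D u = t})"
      by (rule count_lower) (use t cD card_field2 in \<open>auto simp: D_def mult.commute\<close>)
    also have "card {u\<in>(WS D :: (nat \<times> 'g \<Rightarrow> 'f) set). wt D u = t} = card {c\<in>colI n (UNIV :: ('g \<Rightarrow> 'f) set). hweight n c = t}"
      unfolding D_def by (rule count_bij[symmetric])
    also have "\<dots> \<le> card {c\<in>colI n (UNIV :: ('g \<Rightarrow> 'f) set). Qp n \<delta> c}"
      by (rule card_mono) (use t finite_colI_any[of n "UNIV :: ('g \<Rightarrow> 'f) set"] in \<open>auto simp: Qp_def\<close>)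
    finally show ?thesis unfolding cD by simp
  qed
  have Tf_ge: "real CARD('f) powr (real (CARD('g) * n) * qentropy (real CARD('f)) (real t / real (CARD('g) * n))) / real (CARD('g) * n + 1)
        / real CARD('g \<Rightarrow> 'f) ^ n \<le> Tf"
    unfolding Tf_def card_colI[of "UNIV :: ('g \<Rightarrow> 'f) set", OF finite] of_nat_power
    by (rule divide_right_mono[OF cnt]) simp
  have "real CARD('g \<Rightarrow> 'f) ^ (k - 1)
          * (real CARD('f) powr (real (CARD('g) * n) * qentropy (real CARD('f)) (real t / real (CARD('g) * n)))
              / real (CARD('g) * n + 1)) / real CARD('g \<Rightarrow> 'f) ^ n
       = real CARD('g \<Rightarrow> 'f) ^ (k - 1) * (real CARD('f) powr (real (CARD('g) * n) * qentropy (real CARD('f)) (real t / real (CARD('g) * n)))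
              / real (CARD('g) * n + 1) / real CARD('g \<Rightarrow> 'f) ^ n)" by (simp only: times_divide_eq_right)
  also have "\<dots> \<le> real (card B0) * Tf"
  proof (rule mult_mono[OF _ Tf_ge])
    show "real CARD('g \<Rightarrow> 'f) ^ (k - 1) \<le> real (card B0)" using cB0 by (metis of_nat_le_iff of_nat_power)
    show "0 \<le> real (card B0)" by (rule of_nat_0_le_iff)
    show "0 \<le> real CARD('f) powr (real (CARD('g) * n) * qentropy (real CARD('f)) (real t / real (CARD('g) * n)))
              / real (CARD('g) * n + 1) / real CARD('g \<Rightarrow> 'f) ^ n"
      by (intro divide_nonneg_nonneg zero_le_power of_nat_0_le_iff powr_ge_zero)
  qed
  also have "\<dots> \<le> ENhat TYPE('g \<Rightarrow> 'f) k n \<delta>" by (rule E1)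
  finally show ?thesis .
qed

lemma exp_dominates:
  fixes \<epsilon> A :: real
  assumes "0 < \<epsilon>" "0 \<le> A"
  shows "\<forall>\<^sub>F n in sequentially. A * real n + 1 \<le> exp (\<epsilon> * real n)"
proof -
  define N0 where "N0 = nat \<lceil>4 * A / \<epsilon>^2\<rceil>"
  have "A * real n + 1 \<le> exp (\<epsilon> * real n)" if "N0 \<le> n" for n
  proof -
    define x where "x = \<epsilon> * real n"
    have x0: "0 \<le> x" unfolding x_def using assms by simp
    have "4 * A / \<epsilon>^2 \<le> real n" using that unfolding N0_def by linarith
    then have "4 * A \<le> real n * \<epsilon>^2" using assms by (simp add: field_simps)
    then have h: "real n * (4 * A) \<le> real n * (real n * \<epsilon>^2)"
      using mult_left_mono[OF \<open>4 * A \<le> real n * \<epsilon>^2\<close>, of "real n"] by simp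
    have h2: "4 * (A * real n) \<le> real n * (real n * \<epsilon>^2)" using h by (simp add: mult_ac)
    have "A * real n \<le> real n * (real n * \<epsilon>^2) / 4"
      using h2 by linarith
    also have "\<dots> = x^2 / 4" unfolding x_def by (simp add: power2_eq_square mult_ac)
    also have "\<dots> \<le> (1 + x/2)^2 - 1" using x0 by (simp add: power2_eq_square field_simps)
    also have "(1 + x/2)^2 \<le> exp (x/2) ^ 2"
      using x0 by (intro power_mono exp_ge_add_one_self) auto
    also have "exp (x/2) ^ 2 = exp x" by (simp add: power2_eq_square exp_add[symmetric])
    finally show ?thesis unfolding x_def by simp
  qed
  then show ?thesis using eventually_sequentially by blast
qed

lemma round_bounds:
  assumes "0 \<le> x"
  shows "x - 1/2 \<le> real (nat (round x))" "real (nat (round x)) \<le> x + 1/2"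
proof -
  have a: "\<bar>of_int (round x) - x\<bar> \<le> 1/2" by (rule of_int_round_abs_le)
  then have "0 \<le> round x" using assms by linarith
  then have "real (nat (round x)) = of_int (round x)" by simp
  then show "x - 1/2 \<le> real (nat (round x))" "real (nat (round x)) \<le> x + 1/2" using a by linarith+
qed

lemma ENhat_nonneg: "0 \<le> ENhat TYPE('g::{finite,ab_group_add} \<Rightarrow> 'f::{finite,field}) k n \<delta>"
  unfolding ENhat_def by (intro divide_nonneg_nonneg sum_nonneg) auto

lemma exp_to_top: "0 < a \<Longrightarrow> filterlim (\<lambda>n. exp (a * real n)) at_top sequentially"
  by (rule filterlim_compose[OF exp_at_top])
     (rule filterlim_tendsto_pos_mult_at_top[OF tendsto_const _ filterlim_real_sequentially])

lemma aux1: "(M::real)*(R*N - 3/2) \<le> K \<Longrightarrow> M*N*(Hh - G/4) \<le> Z \<Longrightarrow> G = R - 1 + Hh \<Longrightarrow> M*N*(3*G/4) - 3/2*M \<le> K - M*N + Z"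
proof -
  assume a: "M*(R*N - 3/2) \<le> K" "M*N*(Hh - G/4) \<le> Z" "G = R - 1 + Hh"
  have e: "M*N*(3*G/4) - 3/2*M = M*(R*N - 3/2) - M*N + M*N*(Hh - G/4)"
    unfolding a(3) by (simp add: field_simps)
  show ?thesis unfolding e using a(1,2) by linarith
qed

lemma aux2: "exp a * (exp c / (D::real)) / exp b = exp (a + c - b) / D"
  by (simp add: exp_add exp_diff)

theorem theorem4p1:
  fixes r \<delta> :: real
  assumes "0 < r" "r < 1" "0 < \<delta>" "\<delta> < 1 - 1 / real CARD('f::{finite,field})"
  defines "E \<equiv> (\<lambda>n::nat. ENhat TYPE('g::{finite,ab_group_add} \<Rightarrow> 'f) (nat (round (r * real n))) n \<delta>)"
  shows "(r < gq (real CARD('f)) \<delta> \<longrightarrow>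
            (E \<longlonglongrightarrow> 0) \<and> (\<exists>a>0. \<exists>c>0. \<forall>\<^sub>F n in sequentially. E n \<le> c * exp (- a * real n)))
       \<and> (r > gq (real CARD('f)) \<delta> \<longrightarrow>
            filterlim E at_top sequentially \<and> (\<exists>a>0. \<exists>c>0. \<forall>\<^sub>F n in sequentially. E n \<ge> c * exp (a * real n)))"
proof -
  define q where "q = real CARD('f)"
  define m where "m = CARD('g)"
  define H where "H = qentropy q \<delta>"
  define kk where "kk n = nat (round (r * real n))" for n :: nat
  have Edef: "E n = ENhat TYPE('g \<Rightarrow> 'f) (kk n) n \<delta>" for n unfolding E_def kk_def by simp
  have q2: "2 \<le> q" unfolding q_def using card_field2[where 'f='f] by linarith
  have m1: "1 \<le> m" unfolding m_def by (simp add: Suc_le_eq card_gt_0_iff)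
  have m1r: "1 \<le> real m" using m1 by simp
  have gqH: "gq (real CARD('f)) \<delta> = 1 - H" unfolding gq_def H_def q_def ..
  have kb: "r * real n - 1/2 \<le> real (kk n)" "real (kk n) \<le> r * real n + 1/2" for n
    unfolding kk_def using round_bounds[of "r * real n"] assms(1) by auto
  have d1: "\<delta> < 1" using assms(4) q2 unfolding q_def[symmetric] by (smt (verit) divide_pos_pos)
  have Enn: "0 \<le> E n" for n unfolding Edef by (rule ENhat_nonneg)
  show ?thesis
  proof (rule conjI; rule impI)
    assume rg: "r < gq (real CARD('f)) \<delta>"
    define \<gamma> where "\<gamma> = 1 - H - r"
    have \<gamma>0: "0 < \<gamma>" using rg unfolding gqH \<gamma>_def by simp
    define C where "C = real (CARD(('g \<Rightarrow> 'f) set)) * real m * 2 powr (1/2)"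
    define a where "a = \<gamma> * ln 2"
    have a0: "0 < a" unfolding a_def using \<gamma>0 by simp
    have C0: "0 < C" unfolding C_def using m1 by (simp add: card_gt_0_iff)
    have bound: "E n \<le> C * exp (- a * real n)" if n: "1 / (2 * \<gamma>) \<le> real n" for n
    proof -
      have "1 \<le> 2 * \<gamma> * real n" using n \<gamma>0 by (simp add: divide_le_eq mult.commute)
      then have ex: "real (kk n) + real n * H - real n \<le> 1/2 - \<gamma> * real n"
        using kb(2)[of n] unfolding \<gamma>_def by (simp add: algebra_simps)
      have e: "real (kk n) + real n * qentropy (real CARD('f)) \<delta> - real n \<le> 0"
        using ex \<open>1 \<le> 2 * \<gamma> * real n\<close> unfolding H_def q_def by linarith
      have "E n \<le> real (CARD(('g \<Rightarrow> 'f) set)) * real m * 2 powr (real (kk n) + real n * H - real n)"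
        unfolding Edef H_def q_def m_def by (rule E_upper[OF assms(3,4) e])
      also have "\<dots> \<le> real (CARD(('g \<Rightarrow> 'f) set)) * real m * 2 powr (1/2 - \<gamma> * real n)"
        by (intro mult_left_mono powr_mono ex) auto
      also have "2 powr (1/2 - \<gamma> * real n) = 2 powr (1/2) * exp (- a * real n)"
        unfolding a_def by (simp add: powr_def exp_diff[symmetric] exp_add[symmetric] algebra_simps)
      finally show ?thesis unfolding C_def by (simp add: mult_ac)
    qed
    have ev: "\<forall>\<^sub>F n in sequentially. E n \<le> C * exp (- a * real n)"
    proof -
      have "E n \<le> C * exp (- a * real n)" if "nat \<lceil>1 / (2 * \<gamma>)\<rceil> \<le> n" for n
      proof (rule bound)
        have "1 / (2 * \<gamma>) \<le> real (nat \<lceil>1 / (2 * \<gamma>)\<rceil>)" by (rule real_nat_ceiling_ge)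
        also have "\<dots> \<le> real n" using that by simp
        finally show "1 / (2 * \<gamma>) \<le> real n" .
      qed
      then show ?thesis using eventually_sequentially by blast
    qed
    have lim0: "(\<lambda>n. C * exp (- a * real n)) \<longlonglongrightarrow> 0"
    proof -
      have "(\<lambda>n. inverse (exp (a * real n))) \<longlonglongrightarrow> 0"
        by (rule tendsto_inverse_0_at_top[OF exp_to_top[OF a0]])
      then have "(\<lambda>n. C * inverse (exp (a * real n))) \<longlonglongrightarrow> C * 0"
        by (intro tendsto_mult tendsto_const)
      then show ?thesis by (simp add: exp_minus)
    qed
    have "E \<longlonglongrightarrow> 0"
      by (rule tendsto_sandwich[OF _ ev tendsto_const lim0]) (simp add: Enn)
    then show "(E \<longlonglongrightarrow> 0) \<and> (\<exists>a>0. \<exists>c>0. \<forall>\<^sub>F n in sequentially. E n \<le> c * exp (- a * real n))"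
      using ev a0 C0 by blast
  next
    assume gr: "gq (real CARD('f)) \<delta> < r"
    define \<gamma> where "\<gamma> = r - 1 + H"
    have \<gamma>0: "0 < \<gamma>" using gr unfolding gqH \<gamma>_def by simp
    define NN where "NN n = m * n" for n
    define tt where "tt n = nat \<lfloor>\<delta> * real (NN n)\<rfloor>" for n
    define p where "p n = real (tt n) / real (NN n)" for n
    have tt_le: "real (tt n) \<le> \<delta> * real (NN n)" for n
      unfolding tt_def using assms(3) by (simp add: of_nat_nat)
    have tt_ge: "\<delta> * real (NN n) - 1 < real (tt n)" for n
      unfolding tt_def using assms(3) by (simp add: of_nat_nat)
    have NNn: "real n \<le> real (NN n)" for n unfolding NN_def using mult_right_mono[OF m1r, of "real n"] by simp
    have p_lim: "p \<longlonglongrightarrow> \<delta>"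
    proof (rule tendsto_sandwich[of "\<lambda>n. \<delta> - inverse (real n)" p sequentially "\<lambda>_. \<delta>"])
      show "\<forall>\<^sub>F n in sequentially. \<delta> - inverse (real n) \<le> p n"
      proof -
        have "\<delta> - inverse (real n) \<le> p n" if "1 \<le> n" for n
        proof -
          have N0: "0 < real (NN n)" using NNn[of n] that by simp
          have a: "(\<delta> * real (NN n) - 1) / real (NN n) \<le> real (tt n) / real (NN n)"
            using tt_ge[of n] N0 by (intro divide_right_mono) auto
          have b: "(\<delta> * real (NN n) - 1) / real (NN n) = \<delta> - inverse (real (NN n))"
            using N0 by (simp add: field_simps)
          have "\<delta> - inverse (real (NN n)) \<le> p n"
            unfolding p_def using a b by simp
          moreover have "inverse (real (NN n)) \<le> inverse (real n)"
            using NNn[of n] that by (intro le_imp_inverse_le) auto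
          ultimately show ?thesis by linarith
        qed
        then show ?thesis using eventually_sequentially by blast
      qed
      show "\<forall>\<^sub>F n in sequentially. p n \<le> \<delta>"
      proof -
        have "p n \<le> \<delta>" if "1 \<le> n" for n
        proof -
          have N0: "0 < real (NN n)" using NNn[of n] that by simp
          show ?thesis unfolding p_def using tt_le[of n] N0 by (simp add: divide_le_eq)
        qed
        then show ?thesis using eventually_sequentially by blast
      qed
      have "(\<lambda>n. inverse (real n)) \<longlonglongrightarrow> 0"
        by (rule tendsto_inverse_0_at_top[OF filterlim_real_sequentially])
      then show "(\<lambda>n. \<delta> - inverse (real n)) \<longlonglongrightarrow> \<delta>"
        using tendsto_diff[OF tendsto_const[of \<delta>]] by fastforce
      show "(\<lambda>_. \<delta>) \<longlonglongrightarrow> \<delta>" by simp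
    qed
    define f where "f x = x * log q (q - 1) - x * log q x - (1 - x) * log q (1 - x)" for x
    have fH: "f \<delta> = H" unfolding f_def H_def qentropy_def using assms(3) d1 by simp
    have f_lim: "(\<lambda>n. f (p n)) \<longlonglongrightarrow> H"
    proof -
      have "(\<lambda>n. f (p n)) \<longlonglongrightarrow> f \<delta>"
        unfolding f_def using q2 assms(3) d1
        by (intro tendsto_intros p_lim) auto
      then show ?thesis using fH by simp
    qed
    have evp: "\<forall>\<^sub>F n in sequentially. 0 < p n \<and> p n < 1"
      using order_tendstoD(1)[OF p_lim assms(3)] order_tendstoD(2)[OF p_lim d1] by eventually_elim auto
    have h_lim: "(\<lambda>n. qentropy q (p n)) \<longlonglongrightarrow> H"
    proof (rule Lim_transform_eventually[OF f_lim])
      show "\<forall>\<^sub>F n in sequentially. f (p n) = qentropy q (p n)"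
        using evp by eventually_elim (auto simp: f_def qentropy_def)
    qed
    have ev4: "\<forall>\<^sub>F n in sequentially. H - \<gamma> / 4 < qentropy q (p n)"
      using order_tendstoD(1)[OF h_lim, of "H - \<gamma> / 4"] \<gamma>0 by simp
    define \<epsilon> where "\<epsilon> = real m * \<gamma> * ln q / 4"
    have \<epsilon>0: "0 < \<epsilon>" unfolding \<epsilon>_def using \<gamma>0 q2 m1 by simp
    have evexp: "\<forall>\<^sub>F n in sequentially. real m * real n + 1 \<le> exp (\<epsilon> * real n)"
      by (rule exp_dominates[OF \<epsilon>0]) simp
    define N1 where "N1 = nat \<lceil>3 / (2 * r) + 1 / \<delta> + 1\<rceil>"
    have evN: "\<forall>\<^sub>F n in sequentially. N1 \<le> n" by (rule eventually_ge_at_top)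
    define a where "a = real m * \<gamma> * ln q / 2"
    define c where "c = exp (- (3/2) * real m * ln q)"
    have a0: "0 < a" unfolding a_def using \<gamma>0 q2 m1 by simp
    have c0: "0 < c" unfolding c_def by simp
    have Qq: "real CARD('g \<Rightarrow> 'f) ^ j = exp (real m * real j * ln q)" for j
    proof -
      have "CARD('g \<Rightarrow> 'f) = CARD('f) ^ CARD('g)" using m1 card_field2[where 'f='f] unfolding m_def by (simp add: card_fun)
      then have "real CARD('g \<Rightarrow> 'f) ^ j = q ^ (m * j)" unfolding q_def m_def by (simp add: power_mult)
      also have "\<dots> = exp (ln q) ^ (m * j)" using q2 by simp
      also have "\<dots> = exp (real (m * j) * ln q)" by (rule exp_of_nat_mult[symmetric])
      finally show ?thesis by simp
    qed
    have lower: "c * exp (a * real n) \<le> E n"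
      if nN: "N1 \<le> n" and h4: "H - \<gamma> / 4 < qentropy q (p n)" and hx: "real m * real n + 1 \<le> exp (\<epsilon> * real n)" for n
    proof -
      have "3 / (2 * r) + 1 / \<delta> + 1 \<le> real N1" unfolding N1_def by (rule real_nat_ceiling_ge)
      also have "\<dots> \<le> real n" using nN by simp
      finally have nb: "3 / (2 * r) + 1 / \<delta> + 1 \<le> real n" .
      have pos1: "0 < 3 / (2 * r)" "0 < 1 / \<delta>" using assms(1,3) by simp_all
      have n1: "1 \<le> real n" using nb pos1 by linarith
      have "3 / (2 * r) \<le> real n" using nb pos1 by linarith
      then have "3 \<le> real n * (2 * r)" using assms(1) by (simp add: divide_le_eq)
      then have k1: "1 \<le> real (kk n)" using kb(1)[of n] by (simp add: algebra_simps)
      then have k0: "0 < kk n" by simp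
      have "1 / \<delta> \<le> real n" using nb pos1 by linarith
      then have "1 \<le> real n * \<delta>" using assms(3) by (simp add: divide_le_eq)
      also have "real n * \<delta> \<le> real (NN n) * \<delta>" using NNn[of n] assms(3) by (intro mult_right_mono) auto
      finally have dN: "1 \<le> \<delta> * real (NN n)" by (simp add: mult.commute)
      have "0 < real (tt n)" using tt_ge[of n] dN by linarith
      then have t0: "0 < tt n" by simp
      have tN: "tt n < m * n"
      proof -
        have "0 < real (NN n)" using NNn[of n] n1 by simp
        then have "\<delta> * real (NN n) < real (NN n)" using d1 by simp
        then have "real (tt n) < real (NN n)" using tt_le[of n] by linarith
        then show ?thesis unfolding NN_def by (simp only: of_nat_less_iff)
      qed
      have tle: "real (tt n) \<le> real m * real n * \<delta>" using tt_le[of n] unfolding NN_def by (simp add: mult_ac)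
      have EL: "real CARD('g \<Rightarrow> 'f) ^ (kk n - 1)
          * (q powr (real (m * n) * qentropy q (real (tt n) / real (m * n)))
              / real (m * n + 1)) / real CARD('g \<Rightarrow> 'f) ^ n \<le> E n"
        unfolding Edef q_def m_def
        by (rule E_lower[OF k0 t0]) (use tN tle in \<open>simp_all add: m_def\<close>)
      define X where "X = real m * real (kk n - 1) - real m * real n + real (NN n) * qentropy q (p n)"
      have L1: "real CARD('g \<Rightarrow> 'f) ^ (kk n - 1)
          * (q powr (real (m * n) * qentropy q (real (tt n) / real (m * n)))
              / real (m * n + 1)) / real CARD('g \<Rightarrow> 'f) ^ n = exp (X * ln q) / (real (NN n) + 1)"
      proof -
        have C: "q powr (real (m * n) * qentropy q (real (tt n) / real (m * n))) = exp (real (NN n) * qentropy q (p n) * ln q)"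
          unfolding powr_def p_def NN_def using q2 by simp
        have D: "real (m * n + 1) = real (NN n) + 1" unfolding NN_def by simp
        have "real CARD('g \<Rightarrow> 'f) ^ (kk n - 1)
          * (q powr (real (m * n) * qentropy q (real (tt n) / real (m * n)))
              / real (m * n + 1)) / real CARD('g \<Rightarrow> 'f) ^ n
          = exp (real m * real (kk n - 1) * ln q) * (exp (real (NN n) * qentropy q (p n) * ln q) / (real (NN n) + 1))
             / exp (real m * real n * ln q)"
          unfolding Qq C D ..
        also have "\<dots> = exp (real m * real (kk n - 1) * ln q + real (NN n) * qentropy q (p n) * ln q - real m * real n * ln q) / (real (NN n) + 1)"
          by (rule aux2)
        also have "real m * real (kk n - 1) * ln q + real (NN n) * qentropy q (p n) * ln q - real m * real n * ln q = X * ln q"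
          unfolding X_def by (simp add: algebra_simps)
        finally show ?thesis .
      qed
      have X_ge: "real m * real n * (3 * \<gamma> / 4) - 3/2 * real m \<le> X"
      proof -
        have kr: "r * real n - 3/2 \<le> real (kk n - 1)" using kb(1)[of n] k1 by (simp add: of_nat_diff)
        have A1: "real m * (r * real n - 3/2) \<le> real m * real (kk n - 1)"
          using kr by (intro mult_left_mono) auto
        have A2: "real m * real n * (H - \<gamma> / 4) \<le> real (NN n) * qentropy q (p n)"
          using mult_left_mono[OF less_imp_le[OF h4], of "real m * real n"] unfolding NN_def by simp
        show ?thesis unfolding X_def by (rule aux1[OF A1 A2]) (simp add: \<gamma>_def)
      qed
      have Dpos: "0 < real (NN n) + 1" by simp
      have hx': "1 \<le> exp (\<epsilon> * real n) / (real (NN n) + 1)"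
        using hx Dpos unfolding NN_def by (simp add: divide_le_eq)
      have "c * exp (a * real n) * 1 \<le> c * exp (a * real n) * (exp (\<epsilon> * real n) / (real (NN n) + 1))"
        using hx' c0 by (intro mult_left_mono) auto
      also have "\<dots> = exp (- (3/2) * real m * ln q + a * real n + \<epsilon> * real n) / (real (NN n) + 1)"
        unfolding c_def times_divide_eq_right mult_exp_exp ..
      also have "- (3/2) * real m * ln q + a * real n + \<epsilon> * real n = (real m * real n * (3 * \<gamma> / 4) - 3/2 * real m) * ln q"
        unfolding a_def \<epsilon>_def by (simp add: field_simps)
      also have "exp (\<dots>) / (real (NN n) + 1) \<le> exp (X * ln q) / (real (NN n) + 1)"
        using X_ge q2 Dpos by (intro divide_right_mono) (auto intro!: mult_right_mono)
      also have "\<dots> \<le> E n" using EL unfolding L1 .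
      finally show ?thesis by simp
    qed
    have ev: "\<forall>\<^sub>F n in sequentially. c * exp (a * real n) \<le> E n"
      using evN ev4 evexp by eventually_elim (rule lower)
    have "filterlim (\<lambda>n. c * exp (a * real n)) at_top sequentially"
      by (rule filterlim_tendsto_pos_mult_at_top[OF tendsto_const c0 exp_to_top[OF a0]])
    then have "filterlim E at_top sequentially" by (rule filterlim_at_top_mono[OF _ ev])
    then show "filterlim E at_top sequentially \<and> (\<exists>a>0. \<exists>c>0. \<forall>\<^sub>F n in sequentially. E n \<ge> c * exp (a * real n))"
      using ev a0 c0 by blast
  qed
qed

end
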